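(* Fix $\beta>2$ and let $F_\beta(\mathbf{x},r)$, $\mathbf{m}_i^\beta(r)$, $\boldsymbol{\sigma}_0^\beta(r)$ be as in the context, and let $h_0^\beta(r)=F_\beta(\boldsymbol{\sigma}_0^\beta(r),r)$. For every $r>0$, the connected components of the set $\{\mathbf{x}\in\Xi: F_\beta(\mathbf{x},r)<h_0^\beta(r)\}$ include two components $W_\beta(1,r)$ and $W_\beta(2,r)$ with $\mathbf{m}_i^\beta(r)\in W_\beta(i,r)$, $i=1,2$, and $\overline{W_\beta(1,r)}\cap\overline{W_\beta(2,r)}=\{\boldsymbol{\sigma}_0^\beta(r)\}$. For all sufficiently small $r>0$ there is an additional connected component $W_\beta(0,r)$ of this set, containing $\mathbf{m}_0^\beta(r)$ and satisfying $\overline{W_\beta(0,r)}\cap\overline{W_\beta(i,r)}=\varnothing$ for $i=1,2$.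
   Context: $\Xi=\{(x_1,x_2): x_1,x_2\ge0,\ x_1+x_2\le1\}$, $x_0=1-x_1-x_2$, $\mathbf{v}_k=(\cos(2\pi k/3),\sin(2\pi k/3))$, $F_\beta(\mathbf{x},r)=-\frac12|\sum_{k=0}^2x_k\mathbf{v}_k|^2+\frac1\beta\sum_{k=0}^2x_k\log(3x_k)+r\,x_0-\frac r2(x_1+x_2)$ (external field of magnitude $r$, angle $\pi$), with $0\log0=0$; $\overline{A}$ is the closure of $A$. Let $h(t)=-3t(1-2t)\log\frac{1-2t}{t}-3t+1$, $f_r(t)=\frac{2}{3(1-r-3t)}\log\frac{1-2t}{t}$, $k_r=(1-r)/3$; for $0<r<1$, $m_0(r)$ is the unique solution in $(0,k_r)$ of $h(t)=r$; $r_2^\beta$ is the unique $r\in(0,1)$ with $f_r(m_0(r))=\beta$. For every $r>0$, $q_\beta(r)$ is the unique solution of $f_r(t)=\beta$ in $(1/3,1/2)$ and $\boldsymbol{\sigma}_0^\beta(r)=(q_\beta(r),q_\beta(r))$. For $r\in(0,r_2^\beta)$, $p_\beta(r)$ is the unique solution of $f_r(t)=\beta$ in $(0,m_0(r))$ and $\mathbf{m}_0^\beta(r)=(p_\beta(r),p_\beta(r))$. Let $G_\beta(x)=\frac1\beta\log x-\frac32x$, $l_\beta=2/(3\beta)$, $g_\beta=G_\beta(l_\beta)$; for $y<g_\beta$, $H_\beta(y)<l_\beta<K_\beta(y)$ solve $G_\beta(x)=y$, and $H_\beta(g_\beta)=K_\beta(g_\beta)=l_\beta$. For $r>0$, $y_2^\beta(r)$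 is the unique $y\le g_\beta$ with $H_\beta(y-3r/2)+H_\beta(y)+K_\beta(y)=1$; $\mathbf{m}_1^\beta(r)=(H_\beta(y_2^\beta(r)),K_\beta(y_2^\beta(r)))$ and $\mathbf{m}_2^\beta(r)=(K_\beta(y_2^\beta(r)),H_\beta(y_2^\beta(r)))$. *)

theory Defs
  imports "HOL-Analysis.Analysis"
begin

text \<open>Points of the simplex Xi are pairs (x1, x2); x0 = 1 - x1 - x2.\<close>

definition Xi :: "(real \<times> real) set" where
  "Xi = {(x1, x2). 0 \<le> x1 \<and> 0 \<le> x2 \<and> x1 + x2 \<le> 1}"

definition vv :: "nat \<Rightarrow> real \<times> real" where
  "vv k = (cos (2 * pi * real k / 3), sin (2 * pi * real k / 3))"

definition ent :: "real \<Rightarrow> real" where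
  "ent t = (if t = 0 then 0 else t * ln (3 * t))"

definition Fb :: "real \<Rightarrow> real \<times> real \<Rightarrow> real \<Rightarrow> real" where
  "Fb \<beta> x r = (let x1 = fst x; x2 = snd x; x0 = 1 - x1 - x2 in
     - (1/2) * (norm (x0 *\<^sub>R vv 0 + x1 *\<^sub>R vv 1 + x2 *\<^sub>R vv 2))\<^sup>2
     + (1 / \<beta>) * (ent x0 + ent x1 + ent x2)
     + r * x0 - (r / 2) * (x1 + x2))"

definition hh :: "real \<Rightarrow> real" where
  "hh t = - 3 * t * (1 - 2 * t) * ln ((1 - 2 * t) / t) - 3 * t + 1"

definition ff :: "real \<Rightarrow> real \<Rightarrow> real" where
  "ff r t = 2 / (3 * (1 - r - 3 * t)) * ln ((1 - 2 * t) / t)"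

definition kk :: "real \<Rightarrow> real" where
  "kk r = (1 - r) / 3"

definition m0 :: "real \<Rightarrow> real" where
  "m0 r = (THE t. 0 < t \<and> t < kk r \<and> hh t = r)"

definition r2 :: "real \<Rightarrow> real" where
  "r2 \<beta> = (THE r. 0 < r \<and> r < 1 \<and> ff r (m0 r) = \<beta>)"

definition qb :: "real \<Rightarrow> real \<Rightarrow> real" where
  "qb \<beta> r = (THE t. 1/3 < t \<and> t < 1/2 \<and> ff r t = \<beta>)"

definition sigma0 :: "real \<Rightarrow> real \<Rightarrow> real \<times> real" where
  "sigma0 \<beta> r = (qb \<beta> r, qb \<beta> r)"

definition pb :: "real \<Rightarrow> real \<Rightarrow> real" where
  "pb \<beta> r = (THE t. 0 < t \<and> t < m0 r \<and> ff r t = \<beta>)"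

definition mvec0 :: "real \<Rightarrow> real \<Rightarrow> real \<times> real" where
  "mvec0 \<beta> r = (pb \<beta> r, pb \<beta> r)"

definition GG :: "real \<Rightarrow> real \<Rightarrow> real" where
  "GG \<beta> x = (1 / \<beta>) * ln x - (3/2) * x"

definition ll :: "real \<Rightarrow> real" where
  "ll \<beta> = 2 / (3 * \<beta>)"

definition gg :: "real \<Rightarrow> real" where
  "gg \<beta> = GG \<beta> (ll \<beta>)"

text \<open>For y \<le> g: H y is the solution in (0, l], K y the solution in [l, \<infinity>)
  (both equal l when y = g).\<close>
definition HH :: "real \<Rightarrow> real \<Rightarrow> real" where
  "HH \<beta> y = (THE x. 0 < x \<and> x \<le> ll \<beta> \<and> GG \<beta> x = y)"

definition KK :: "real \<Rightarrow> real \<Rightarrow> real" where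
  "KK \<beta> y = (THE x. ll \<beta> \<le> x \<and> GG \<beta> x = y)"

definition y2 :: "real \<Rightarrow> real \<Rightarrow> real" where
  "y2 \<beta> r = (THE y. y \<le> gg \<beta> \<and> HH \<beta> (y - 3 * r / 2) + HH \<beta> y + KK \<beta> y = 1)"

definition mvec1 :: "real \<Rightarrow> real \<Rightarrow> real \<times> real" where
  "mvec1 \<beta> r = (HH \<beta> (y2 \<beta> r), KK \<beta> (y2 \<beta> r))"

definition mvec2 :: "real \<Rightarrow> real \<Rightarrow> real \<times> real" where
  "mvec2 \<beta> r = (KK \<beta> (y2 \<beta> r), HH \<beta> (y2 \<beta> r))"

definition h0 :: "real \<Rightarrow> real \<Rightarrow> real" where
  "h0 \<beta> r = Fb \<beta> (sigma0 \<beta> r) r"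

definition sublevel :: "real \<Rightarrow> real \<Rightarrow> (real \<times> real) set" where
  "sublevel \<beta> r = {x \<in> Xi. Fb \<beta> x r < h0 \<beta> r}"

end

theory Submission
  imports Defs "HOL-Real_Asymp.Real_Asymp"
begin

definition EE :: "real \<Rightarrow> real \<Rightarrow> real \<Rightarrow> real \<Rightarrow> real \<Rightarrow> real \<Rightarrow> real \<Rightarrow> real" where
  "EE \<beta> f0 f1 f2 x0 x1 x2 = - (1/2) * (x0\<^sup>2 + x1\<^sup>2 + x2\<^sup>2 - x0*x1 - x0*x2 - x1*x2)
     + (1/\<beta>) * (ent x0 + ent x1 + ent x2) + f0*x0 + f1*x1 + f2*x2"

lemma vv0: "vv 0 = (1, 0)" by (simp add: vv_def)
lemma vv1: "vv 1 = (-1/2, sqrt 3 / 2)" by (simp add: vv_def cos_120 sin_120)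
lemma vv2: "vv 2 = (-1/2, - sqrt 3 / 2)"
proof -
  have e: "4 * pi / 3 = pi + pi/3" by simp
  have "cos (4 * pi / 3) = -1/2" "sin (4*pi/3) = - sqrt 3 / 2"
    unfolding e by (simp only: cos_add sin_add cos_pi sin_pi cos_60 sin_60; simp)+
  then show ?thesis unfolding vv_def by simp
qed

lemma norm_sq_pair: "(norm ((a::real), (b::real)))\<^sup>2 = a\<^sup>2 + b\<^sup>2"
  by (simp add: norm_Pair)

lemma Fb_EE: "Fb \<beta> x r = EE \<beta> r (-r/2) (-r/2) (1 - fst x - snd x) (fst x) (snd x)"
proof -
  have s3: "sqrt 3 * sqrt 3 = (3::real)" by simp
  have v: "\<And>a b c. a *\<^sub>R vv 0 + b *\<^sub>R vv 1 + c *\<^sub>R vv 2 = (a - b/2 - c/2, (b - c) * sqrt 3 / 2)"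
    unfolding vv0 vv1 vv2 by (simp add: algebra_simps)
  have n: "\<And>a b c. (norm (a *\<^sub>R vv 0 + b *\<^sub>R vv 1 + c *\<^sub>R vv 2))\<^sup>2 = a\<^sup>2 + b\<^sup>2 + c\<^sup>2 - a*b - a*c - b*c"
    unfolding v norm_sq_pair by (simp add: power2_eq_square field_simps s3)
  show ?thesis
  unfolding Fb_def EE_def Let_def n
  by (simp add: algebra_simps)
qed

lemma ent_pos: "t > 0 \<Longrightarrow> ent t = t * ln (3*t)" by (simp add: ent_def)

lemma DERIV_ent: assumes "t > 0" shows "(ent has_real_derivative (ln (3*t) + 1)) (at t)"
proof -
  have "((\<lambda>x. x * ln (3*x)) has_real_derivative (ln (3*t) + 1)) (at t)"
    using assms by (auto intro!: derivative_eq_intros simp: field_simps)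
  then show ?thesis
    by (rule has_field_derivative_transform_within_open[where S="{0<..}"]) (use assms in \<open>auto simp: ent_def\<close>)
qed

lemma ent_cont: "continuous_on {0..} ent"
proof -
  have "continuous (at x within {0..}) ent" if "x \<ge> 0" for x
  proof (cases "x = 0")
    case True
    have "((\<lambda>x. x * ln (3*x)) \<longlongrightarrow> 0) (at_right (0::real))" by real_asymp
    then have "(ent \<longlongrightarrow> 0) (at_right (0::real))"
      by (rule tendsto_cong[THEN iffD1, rotated]) (auto simp: eventually_at_right_less ent_def eventually_at_right intro!: exI[of _ 1])
    then show ?thesis using True
      by (simp add: continuous_within at_within_Ici_at_right ent_def)
  next
    case False
    then have "isCont ent x" using DERIV_ent[of x] that DERIV_isCont by force
    then show ?thesis using continuous_at_imp_continuous_at_within by blast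
  qed
  then show ?thesis by (simp add: continuous_on_eq_continuous_within)
qed

lemma cont_ent_comp: "continuous_on S a \<Longrightarrow> (\<And>s. s \<in> S \<Longrightarrow> a s \<ge> 0) \<Longrightarrow> continuous_on S (\<lambda>s. ent (a s))"
  by (rule continuous_on_compose2[OF ent_cont]) auto

lemma cont_EE:
  assumes "continuous_on S a" "continuous_on S b" "continuous_on S c"
    "\<And>s. s \<in> S \<Longrightarrow> a s \<ge> 0" "\<And>s. s \<in> S \<Longrightarrow> b s \<ge> 0" "\<And>s. s \<in> S \<Longrightarrow> c s \<ge> 0"
  shows "continuous_on S (\<lambda>s. EE \<beta> f0 f1 f2 (a s) (b s) (c s))"
  unfolding EE_def using assms
  by (intro continuous_intros cont_ent_comp) auto

lemma EE_swap01: "EE \<beta> f0 f1 f2 x0 x1 x2 = EE \<beta> f1 f0 f2 x1 x0 x2"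
  by (simp add: EE_def algebra_simps)
lemma EE_swap12: "EE \<beta> f0 f1 f2 x0 x1 x2 = EE \<beta> f0 f2 f1 x0 x2 x1"
  by (simp add: EE_def algebra_simps)
lemma EE_swap02: "EE \<beta> f0 f1 f2 x0 x1 x2 = EE \<beta> f2 f1 f0 x2 x1 x0"
  by (simp add: EE_def algebra_simps)

lemma DERIV_ent_comp:
  "(f has_real_derivative f') (at x) \<Longrightarrow> f x > 0 \<Longrightarrow>
   ((\<lambda>x. ent (f x)) has_real_derivative (ln (3 * f x) + 1) * f') (at x)"
  using DERIV_chain2[OF DERIV_ent] by blast

lemma DERIV_EE01:
  assumes "a + d > 0" "b - d > 0" "\<beta> \<noteq> 0"
  shows "((\<lambda>\<delta>. EE \<beta> f0 f1 f2 (a+\<delta>) (b-\<delta>) c) has_real_derivative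
           (GG \<beta> (a+d) + f0 - GG \<beta> (b-d) - f1)) (at d)"
proof -
  have "((\<lambda>\<delta>. EE \<beta> f0 f1 f2 (a+\<delta>) (b-\<delta>) c) has_real_derivative
     (- (1/2) * (2*(a+d) - 2*(b-d) - ((b-d) - (a+d)) - c + c)
      + (1/\<beta>) * ((ln (3*(a+d)) + 1) - (ln (3*(b-d)) + 1)) + f0 - f1)) (at d)"
    unfolding EE_def using assms
    by (auto intro!: derivative_eq_intros DERIV_ent_comp simp: algebra_simps power2_eq_square)
       (simp add: field_simps)
  moreover have "- (1/2) * (2*(a+d) - 2*(b-d) - ((b-d) - (a+d)) - c + c)
      + (1/\<beta>) * ((ln (3*(a+d)) + 1) - (ln (3*(b-d)) + 1)) + f0 - f1
      = GG \<beta> (a+d) + f0 - GG \<beta> (b-d) - f1"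
  proof -
    have "ln (3*(a+d)) = ln 3 + ln (a+d)" "ln (3*(b-d)) = ln 3 + ln (b-d)"
      using assms ln_mult[of 3 "a+d"] ln_mult[of 3 "b-d"] by simp_all
    then show ?thesis by (simp add: GG_def algebra_simps) (simp add: field_simps)
  qed
  ultimately show ?thesis by (rule DERIV_cong)
qed


lemma ln_lt_minus_one: "0 < (x::real) \<Longrightarrow> x \<noteq> 1 \<Longrightarrow> ln x < x - 1"
  using ln_le_minus_one[of x] ln_eq_minus_one[of x] by force

context fixes \<beta> :: real assumes b2: "\<beta> > 2"
begin

lemma bpos: "\<beta> > 0" using b2 by simp
lemma ll_pos: "ll \<beta> > 0" using b2 by (simp add: ll_def)
lemma ll_third: "ll \<beta> < 1/3" using b2 by (simp add: ll_def field_simps)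

lemma GG_inc: assumes "0 < x" "x < y" "y \<le> ll \<beta>" shows "GG \<beta> x < GG \<beta> y"
proof -
  have y0: "y > 0" using assms by simp
  have "ln (x/y) < x/y - 1" using assms by (intro ln_lt_minus_one) (auto simp: field_simps)
  then have h: "ln y - ln x > (y - x) / y" using assms y0 by (simp add: ln_div field_simps)
  have "(y - x)/y \<ge> \<beta> * (3/2) * (y - x)"
  proof -
    have "\<beta> * y \<le> 2/3" using assms(3) bpos by (simp add: ll_def field_simps)
    then have "(\<beta> * y * 3) * (y - x) \<le> 2 * (y - x)" using assms by (intro mult_right_mono) auto
    then have "\<beta> * y * (y - x) * (3/2) \<le> (y - x)" by (simp add: algebra_simps)
    then show ?thesis using y0 by (simp add: field_simps)
  qed
  with h have "ln y - ln x > \<beta> * (3/2) * (y - x)" by linarith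
  then have "(ln y - ln x)/\<beta> > (3/2) * (y - x)" using bpos by (simp add: field_simps)
  moreover have "GG \<beta> y - GG \<beta> x = (ln y - ln x)/\<beta> - 3/2*(y - x)"
    by (simp add: GG_def diff_divide_distrib algebra_simps)
  ultimately show ?thesis by linarith
qed

lemma GG_dec: assumes "ll \<beta> \<le> x" "x < y" shows "GG \<beta> y < GG \<beta> x"
proof -
  have x0: "x > 0" using assms ll_pos by simp
  have "ln (y/x) < y/x - 1" using assms x0 by (intro ln_lt_minus_one) (auto simp: field_simps)
  then have h: "ln y - ln x < (y - x) / x" using assms x0 by (simp add: ln_div field_simps)
  have "(y - x)/x \<le> \<beta> * (3/2) * (y - x)"
  proof -
    have "\<beta> * x \<ge> 2/3" using assms(1) bpos by (simp add: ll_def field_simps)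
    then have "(\<beta> * x * 3) * (y - x) \<ge> 2 * (y - x)" using assms by (intro mult_right_mono) auto
    then have "\<beta> * x * (y - x) * (3/2) \<ge> (y - x)" by (simp add: algebra_simps)
    then show ?thesis using x0 by (simp add: field_simps)
  qed
  with h have "ln y - ln x < \<beta> * (3/2) * (y - x)" by linarith
  then have "(ln y - ln x)/\<beta> < (3/2) * (y - x)" using bpos by (simp add: field_simps)
  moreover have "GG \<beta> y - GG \<beta> x = (ln y - ln x)/\<beta> - 3/2*(y - x)"
    by (simp add: GG_def diff_divide_distrib algebra_simps)
  ultimately show ?thesis by linarith
qed

lemma GG_le_gg: assumes "x > 0" shows "GG \<beta> x \<le> gg \<beta>"
  using GG_inc[of x "ll \<beta>"] GG_dec[of "ll \<beta>" x] assms unfolding gg_def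
  by (cases "x < ll \<beta>"; cases "x = ll \<beta>") auto

lemma GG_inj_low: "0 < x \<Longrightarrow> x \<le> ll \<beta> \<Longrightarrow> 0 < y \<Longrightarrow> y \<le> ll \<beta> \<Longrightarrow> GG \<beta> x = GG \<beta> y \<Longrightarrow> x = y"
  using GG_inc[of x y] GG_inc[of y x] by (cases x y rule: linorder_cases) auto

lemma GG_inj_high: "ll \<beta> \<le> x \<Longrightarrow> ll \<beta> \<le> y \<Longrightarrow> GG \<beta> x = GG \<beta> y \<Longrightarrow> x = y"
  using GG_dec[of x y] GG_dec[of y x] by (cases x y rule: linorder_cases) auto

lemma HH_eq: assumes "0 < x" "x \<le> ll \<beta>" "GG \<beta> x = y" shows "HH \<beta> y = x"
  unfolding HH_def
  by (rule the_equality) (use assms GG_inj_low in auto)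

lemma KK_eq: assumes "ll \<beta> \<le> x" "GG \<beta> x = y" shows "KK \<beta> y = x"
  unfolding KK_def
  by (rule the_equality) (use assms GG_inj_high in auto)

lemma GG_cont: "continuous_on {0<..} (GG \<beta>)"
  unfolding GG_def by (intro continuous_intros) auto

lemma HH_ex: assumes "y \<le> gg \<beta>" shows "0 < HH \<beta> y \<and> HH \<beta> y \<le> ll \<beta> \<and> GG \<beta> (HH \<beta> y) = y"
proof -
  define a where "a = min (ll \<beta> / 2) (exp (\<beta> * y))"
  have a0: "a > 0" "a \<le> ll \<beta>" using ll_pos by (auto simp: a_def)
  have "GG \<beta> a \<le> ln a / \<beta>" using a0 by (simp add: GG_def)
  also have "ln a \<le> \<beta> * y" using a0 unfolding a_def
    by (metis exp_gt_zero ln_exp ln_le_cancel_iff min.cobounded2)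
  then have "ln a / \<beta> \<le> y" using bpos by (simp add: field_simps)
  finally have ga: "GG \<beta> a \<le> y" .
  have "\<exists>x\<ge>a. x \<le> ll \<beta> \<and> GG \<beta> x = y"
    using ga assms a0 unfolding gg_def
    by (intro IVT) (auto intro!: continuous_on_interior[OF GG_cont] simp: continuous_on_eq_continuous_at interior_open[OF open_greaterThan])
  then obtain x where x: "a \<le> x" "x \<le> ll \<beta>" "GG \<beta> x = y" by blast
  then have "HH \<beta> y = x" using a0 by (intro HH_eq) auto
  then show ?thesis using x a0 by auto
qed

lemma KK_ex: assumes "y \<le> gg \<beta>" shows "ll \<beta> \<le> KK \<beta> y \<and> GG \<beta> (KK \<beta> y) = y"
proof -
  define a where "a = max (ll \<beta>) (\<bar>y\<bar> + 1)"
  have a0: "a > 0" "a \<ge> ll \<beta>" "a \<ge> \<bar>y\<bar> + 1" using ll_pos by (auto simp: a_def)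
  have "ln a \<le> a - 1" using a0(1) by (rule ln_le_minus_one)
  then have "ln a / \<beta> \<le> a / \<beta>" using bpos by (simp add: divide_right_mono)
  also have "a / \<beta> \<le> a / 2" using a0 b2 by (intro divide_left_mono) auto
  finally have "ln a / \<beta> \<le> a/2" .
  moreover have "(1/\<beta>)*ln a = ln a/\<beta>" by simp
  ultimately have "GG \<beta> a \<le> a/2 - 3/2 * a" unfolding GG_def by linarith
  also have "\<dots> \<le> y" using a0 by linarith
  finally have ga: "GG \<beta> a \<le> y" .
  have "\<exists>x\<ge>ll \<beta>. x \<le> a \<and> GG \<beta> x = y"
    using ga assms a0 ll_pos unfolding gg_def
    by (intro IVT2) (auto intro!: continuous_on_interior[OF GG_cont] simp: continuous_on_eq_continuous_at interior_open[OF open_greaterThan])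
  then obtain x where x: "ll \<beta> \<le> x" "GG \<beta> x = y" by blast
  then have "KK \<beta> y = x" by (intro KK_eq) auto
  then show ?thesis using x by auto
qed

end

definition locmin3 :: "real \<Rightarrow> real \<Rightarrow> real \<Rightarrow> real \<Rightarrow> real \<Rightarrow> real \<Rightarrow> real \<Rightarrow> bool" where
  "locmin3 \<beta> f0 f1 f2 x0 x1 x2 \<longleftrightarrow> (\<exists>\<epsilon>>0. \<forall>a b c. a + b + c = 0 \<and> \<bar>a\<bar> < \<epsilon> \<and> \<bar>b\<bar> < \<epsilon> \<and> \<bar>c\<bar> < \<epsilon>
      \<and> x0 + a \<ge> 0 \<and> x1 + b \<ge> 0 \<and> x2 + c \<ge> 0 \<longrightarrow>
      EE \<beta> f0 f1 f2 x0 x1 x2 \<le> EE \<beta> f0 f1 f2 (x0+a) (x1+b) (x2+c))"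

lemma locmin3_swap01: "locmin3 \<beta> f0 f1 f2 x0 x1 x2 \<Longrightarrow> locmin3 \<beta> f1 f0 f2 x1 x0 x2"
  unfolding locmin3_def
  apply (elim exE conjE, rule exI, rule conjI, assumption)
  apply (intro allI impI)
  subgoal for \<epsilon> a b c
    apply (erule allE[of _ b], erule allE[of _ a], erule allE[of _ c])
    by (subst (1 2) EE_swap01) (auto simp: algebra_simps)
  done

lemma locmin3_swap12: "locmin3 \<beta> f0 f1 f2 x0 x1 x2 \<Longrightarrow> locmin3 \<beta> f0 f2 f1 x0 x2 x1"
  unfolding locmin3_def
  apply (elim exE conjE, rule exI, rule conjI, assumption)
  apply (intro allI impI)
  subgoal for \<epsilon> a b c
    apply (erule allE[of _ a], erule allE[of _ c], erule allE[of _ b])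
    by (subst (1 2) EE_swap12) (auto simp: algebra_simps)
  done

lemma locmin3_swap02: "locmin3 \<beta> f0 f1 f2 x0 x1 x2 \<Longrightarrow> locmin3 \<beta> f2 f1 f0 x2 x1 x0"
  unfolding locmin3_def
  apply (elim exE conjE, rule exI, rule conjI, assumption)
  apply (intro allI impI)
  subgoal for \<epsilon> a b c
    apply (erule allE[of _ c], erule allE[of _ b], erule allE[of _ a])
    by (subst (1 2) EE_swap02) (auto simp: algebra_simps)
  done

lemma aux_lin: "(A::real) \<le> B \<Longrightarrow> 0 < s \<Longrightarrow> A - 3/2*x \<le> B - 3/2*(x - s)" by (simp add: field_simps)

lemma GG_alt: "GG \<beta> x = ln x / \<beta> - 3/2 * x" by (simp add: GG_def)

context fixes \<beta> :: real assumes b2: "\<beta> > 2"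
begin

lemma bne: "\<beta> \<noteq> 0" using b2 by simp

lemma cont_line01: "x1 \<ge> d \<Longrightarrow> 0 \<le> x0 \<Longrightarrow> x2 \<ge> 0 \<Longrightarrow> d \<ge> 0 \<Longrightarrow>
   continuous_on {0..d} (\<lambda>\<delta>. EE \<beta> f0 f1 f2 (x0+\<delta>) (x1-\<delta>) x2)"
  by (intro cont_EE continuous_intros) auto

lemma locmin3_bd:
  assumes lm: "locmin3 \<beta> f0 f1 f2 0 x1 x2" and x1: "x1 > 0" and x2: "x2 \<ge> 0"
  shows False
proof -
  obtain \<epsilon> where e: "\<epsilon> > 0" and H: "\<And>a b c. a + b + c = 0 \<Longrightarrow> \<bar>a\<bar> < \<epsilon> \<Longrightarrow> \<bar>b\<bar> < \<epsilon> \<Longrightarrow> \<bar>c\<bar> < \<epsilon>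
      \<Longrightarrow> 0 + a \<ge> 0 \<Longrightarrow> x1 + b \<ge> 0 \<Longrightarrow> x2 + c \<ge> 0 \<Longrightarrow>
      EE \<beta> f0 f1 f2 0 x1 x2 \<le> EE \<beta> f0 f1 f2 (0+a) (x1+b) (x2+c)"
    using lm unfolding locmin3_def by blast
  define M where "M = 3/2 * x1 + \<bar>f0\<bar> + \<bar>f1\<bar>"
  define d where "d = min (\<epsilon>/2) (min (x1/2) ((x1/2) * exp (- \<beta> * M)))"
  have d0: "d > 0" using e x1 by (simp add: d_def)
  have dle: "d \<le> x1/2" "d < \<epsilon>" "d \<le> (x1/2) * exp (- \<beta> * M)" using e d0 by (auto simp: d_def)
  have neg: "GG \<beta> (0+s) + f0 - GG \<beta> (x1-s) - f1 < 0" if s: "0 < s" "s < d" for s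
  proof -
    have s2: "s < (x1/2) * exp (- \<beta> * M)" using s dle by simp
    have "ln s < ln ((x1/2) * exp (- \<beta> * M))" using s2 s by (simp)
    also have "\<dots> = ln (x1/2) - \<beta> * M" using x1 by (subst ln_mult) auto
    finally have ls: "(ln s - ln (x1/2)) / \<beta> < - M" using b2 by (simp add: field_simps)
    have "ln (x1/2) \<le> ln (x1 - s)" using s dle x1 by simp
    then have "ln (x1/2)/\<beta> \<le> ln (x1 - s)/\<beta>" using b2 by (simp add: divide_right_mono)
    then have "GG \<beta> (x1 - s) \<ge> ln (x1/2)/\<beta> - 3/2 * x1" unfolding GG_alt by (rule aux_lin[OF _ s(1)])
    moreover have "GG \<beta> s \<le> ln s / \<beta>" using s by (simp add: GG_def)
    ultimately have "GG \<beta> (0+s) + f0 - GG \<beta> (x1-s) - f1 \<le> (ln s - ln (x1/2))/\<beta> + M"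
      unfolding M_def by (simp add: diff_divide_distrib)
    with ls show ?thesis by linarith
  qed
  have "EE \<beta> f0 f1 f2 (0+0) (x1-0) x2 > EE \<beta> f0 f1 f2 (0+d) (x1-d) x2"
  proof (rule DERIV_neg_imp_decreasing_open[where f="\<lambda>\<delta>. EE \<beta> f0 f1 f2 (0+\<delta>) (x1-\<delta>) x2"])
    show "0 < d" by (rule d0)
    fix s assume "0 < s" "s < d"
    then show "\<exists>y. ((\<lambda>\<delta>. EE \<beta> f0 f1 f2 (0+\<delta>) (x1-\<delta>) x2) has_real_derivative y) (at s) \<and> y < 0"
      using neg[of s] dle by (intro exI[of _ "GG \<beta> (0+s) + f0 - GG \<beta> (x1-s) - f1"] conjI DERIV_EE01 bne) auto
  next
    show "continuous_on {0..d} (\<lambda>\<delta>. EE \<beta> f0 f1 f2 (0+\<delta>) (x1-\<delta>) x2)"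
      using dle x1 x2 d0 by (intro cont_line01) auto
  qed
  moreover have "EE \<beta> f0 f1 f2 0 x1 x2 \<le> EE \<beta> f0 f1 f2 (0+d) (x1+(-d)) (x2+0)"
    using dle d0 e x1 x2 by (intro H) auto
  ultimately show False by simp
qed

lemma locmin3_crit01:
  assumes lm: "locmin3 \<beta> f0 f1 f2 x0 x1 x2" and x0: "x0 > 0" and x1: "x1 > 0" and x2: "x2 \<ge> 0"
  shows "GG \<beta> x0 + f0 = GG \<beta> x1 + f1"
proof -
  obtain \<epsilon> where e: "\<epsilon> > 0" and H: "\<And>a b c. a + b + c = 0 \<Longrightarrow> \<bar>a\<bar> < \<epsilon> \<Longrightarrow> \<bar>b\<bar> < \<epsilon> \<Longrightarrow> \<bar>c\<bar> < \<epsilon>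
      \<Longrightarrow> x0 + a \<ge> 0 \<Longrightarrow> x1 + b \<ge> 0 \<Longrightarrow> x2 + c \<ge> 0 \<Longrightarrow>
      EE \<beta> f0 f1 f2 x0 x1 x2 \<le> EE \<beta> f0 f1 f2 (x0+a) (x1+b) (x2+c)"
    using lm unfolding locmin3_def by blast
  have D: "((\<lambda>\<delta>. EE \<beta> f0 f1 f2 (x0+\<delta>) (x1-\<delta>) x2) has_real_derivative
           (GG \<beta> (x0+0) + f0 - GG \<beta> (x1-0) - f1)) (at 0)"
    using x0 x1 by (intro DERIV_EE01 bne) auto
  have "GG \<beta> (x0+0) + f0 - GG \<beta> (x1-0) - f1 = 0"
  proof (rule DERIV_local_min[OF D])
    show "0 < min \<epsilon> (min x0 x1)" using e x0 x1 by simp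
    show "\<forall>y. \<bar>0 - y\<bar> < min \<epsilon> (min x0 x1) \<longrightarrow>
        EE \<beta> f0 f1 f2 (x0 + 0) (x1 - 0) x2 \<le> EE \<beta> f0 f1 f2 (x0 + y) (x1 - y) x2"
    proof (intro allI impI)
      fix y assume "\<bar>0 - y\<bar> < min \<epsilon> (min x0 x1)"
      then show "EE \<beta> f0 f1 f2 (x0 + 0) (x1 - 0) x2 \<le> EE \<beta> f0 f1 f2 (x0 + y) (x1 - y) x2"
        using H[of y "-y" 0] e x2 by auto
    qed
  qed
  then show ?thesis by simp
qed

lemma locmin3_pos_crit:
  assumes lm: "locmin3 \<beta> f0 f1 f2 x0 x1 x2" and nn: "x0 \<ge> 0" "x1 \<ge> 0" "x2 \<ge> 0" and s: "x0 + x1 + x2 = 1"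
  shows "x0 > 0 \<and> x1 > 0 \<and> x2 > 0 \<and> GG \<beta> x0 + f0 = GG \<beta> x1 + f1 \<and> GG \<beta> x0 + f0 = GG \<beta> x2 + f2"
proof -
  have p0: "x0 > 0"
  proof (rule ccontr)
    assume "\<not> x0 > 0" then have z: "x0 = 0" using nn by simp
    show False
    proof (cases "x1 > 0")
      case True then show False using locmin3_bd[of f0 f1 f2 x1 x2] lm z nn by simp
    next
      case False then have "x2 > 0" using s z nn by simp
      then show False using locmin3_bd[of f0 f2 f1 x2 x1] locmin3_swap12[OF lm] z nn by simp
    qed
  qed
  have p1: "x1 > 0"
  proof (rule ccontr)
    assume "\<not> x1 > 0" then have z: "x1 = 0" using nn by simp
    have lm': "locmin3 \<beta> f1 f0 f2 x1 x0 x2" by (rule locmin3_swap01[OF lm])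
    show False using locmin3_bd[of f1 f0 f2 x0 x2] lm' z nn p0 by simp
  qed
  have p2: "x2 > 0"
  proof (rule ccontr)
    assume "\<not> x2 > 0" then have z: "x2 = 0" using nn by simp
    have lm': "locmin3 \<beta> f2 f1 f0 x2 x1 x0" by (rule locmin3_swap02[OF lm])
    show False using locmin3_bd[of f2 f1 f0 x1 x0] lm' z nn p1 by simp
  qed
  have c1: "GG \<beta> x0 + f0 = GG \<beta> x1 + f1" using locmin3_crit01[OF lm p0 p1] nn by simp
  have c2: "GG \<beta> x0 + f0 = GG \<beta> x2 + f2"
    using locmin3_crit01[OF locmin3_swap12[OF lm] p0 p2] nn by simp
  show ?thesis using p0 p1 p2 c1 c2 by simp
qed

lemma locmin3_conc:
  assumes lm: "locmin3 \<beta> f0 f1 f2 x0 x1 x2" and x0: "x0 > ll \<beta>" and x1: "x1 > ll \<beta>" and x2: "x2 \<ge> 0"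
    and cr: "GG \<beta> x0 + f0 = GG \<beta> x1 + f1"
  shows False
proof -
  obtain \<epsilon> where e: "\<epsilon> > 0" and H: "\<And>a b c. a + b + c = 0 \<Longrightarrow> \<bar>a\<bar> < \<epsilon> \<Longrightarrow> \<bar>b\<bar> < \<epsilon> \<Longrightarrow> \<bar>c\<bar> < \<epsilon>
      \<Longrightarrow> x0 + a \<ge> 0 \<Longrightarrow> x1 + b \<ge> 0 \<Longrightarrow> x2 + c \<ge> 0 \<Longrightarrow>
      EE \<beta> f0 f1 f2 x0 x1 x2 \<le> EE \<beta> f0 f1 f2 (x0+a) (x1+b) (x2+c)"
    using lm unfolding locmin3_def by blast
  define d where "d = min (\<epsilon>/2) ((x1 - ll \<beta>)/2)"
  have "d \<le> (x1 - ll \<beta>)/2" "d \<le> \<epsilon>/2" unfolding d_def by linarith+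
  then have d0: "d > 0" "d < \<epsilon>" "d < x1 - ll \<beta>" using e x1 by (auto simp: d_def)
  have lp: "ll \<beta> > 0" using ll_pos[OF b2] .
  have "EE \<beta> f0 f1 f2 (x0+0) (x1-0) x2 > EE \<beta> f0 f1 f2 (x0+d) (x1-d) x2"
  proof (rule DERIV_neg_imp_decreasing_open[where f="\<lambda>\<delta>. EE \<beta> f0 f1 f2 (x0+\<delta>) (x1-\<delta>) x2"])
    show "0 < d" by (rule d0)
    fix s assume s: "0 < s" "s < d"
    have "GG \<beta> (x0+s) < GG \<beta> x0" using GG_dec[OF b2, of x0 "x0+s"] x0 s by simp
    moreover have "GG \<beta> (x1) < GG \<beta> (x1-s)" using GG_dec[OF b2, of "x1-s" x1] s d0 by simp
    ultimately have "GG \<beta> (x0+s) + f0 - GG \<beta> (x1-s) - f1 < 0" using cr by linarith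
    then show "\<exists>y. ((\<lambda>\<delta>. EE \<beta> f0 f1 f2 (x0+\<delta>) (x1-\<delta>) x2) has_real_derivative y) (at s) \<and> y < 0"
      using s d0 x0 x1 lp by (intro exI[of _ "GG \<beta> (x0+s) + f0 - GG \<beta> (x1-s) - f1"] conjI DERIV_EE01 bne) auto
  next
    show "continuous_on {0..d} (\<lambda>\<delta>. EE \<beta> f0 f1 f2 (x0+\<delta>) (x1-\<delta>) x2)"
      using d0 x0 x1 x2 lp by (intro cont_line01) auto
  qed
  moreover have "EE \<beta> f0 f1 f2 x0 x1 x2 \<le> EE \<beta> f0 f1 f2 (x0+d) (x1+(-d)) (x2+0)"
    using d0 e x0 x1 x2 lp by (intro H) auto
  ultimately show False by simp
qed

lemma transverse:
  assumes x0: "x0 \<ge> 0" and c: "c > ll \<beta>" and u: "0 < u" "u < c - ll \<beta>"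
  shows "EE \<beta> f0 f1 f1 x0 (c - u) (c + u) < EE \<beta> f0 f1 f1 x0 c c"
proof -
  have lp: "ll \<beta> > 0" using ll_pos[OF b2] .
  have "EE \<beta> f1 f1 f0 (c+0) (c-0) x0 > EE \<beta> f1 f1 f0 (c+u) (c-u) x0"
  proof (rule DERIV_neg_imp_decreasing_open[where f="\<lambda>\<delta>. EE \<beta> f1 f1 f0 (c+\<delta>) (c-\<delta>) x0"])
    show "0 < u" by (rule u)
    fix s assume s: "0 < s" "s < u"
    have "GG \<beta> (c+s) < GG \<beta> (c-s)" using GG_dec[OF b2, of "c-s" "c+s"] s u by simp
    then have "GG \<beta> (c+s) + f1 - GG \<beta> (c-s) - f1 < 0" by linarith
    then show "\<exists>y. ((\<lambda>\<delta>. EE \<beta> f1 f1 f0 (c+\<delta>) (c-\<delta>) x0) has_real_derivative y) (at s) \<and> y < 0"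
      using s u c lp by (intro exI[of _ "GG \<beta> (c+s) + f1 - GG \<beta> (c-s) - f1"] conjI DERIV_EE01 bne) auto
  next
    show "continuous_on {0..u} (\<lambda>\<delta>. EE \<beta> f1 f1 f0 (c+\<delta>) (c-\<delta>) x0)"
      using u c x0 lp by (intro cont_line01) auto
  qed
  then show ?thesis by (subst (1 2) EE_swap02) (simp add: algebra_simps)
qed

end

definition dg :: "real \<Rightarrow> real \<Rightarrow> real \<Rightarrow> real" where
  "dg \<beta> r t = EE \<beta> r (-r/2) (-r/2) (1-2*t) t t"
definition Lf :: "real \<Rightarrow> real" where "Lf t = ln ((1-2*t)/t)"
definition Df :: "real \<Rightarrow> real \<Rightarrow> real" where "Df r t = 1 - r - 3*t"
definition Rf :: "real \<Rightarrow> real \<Rightarrow> real" where "Rf r t = Lf t / Df r t"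
definition Nf :: "real \<Rightarrow> real \<Rightarrow> real" where "Nf r t = - Df r t / (t * (1 - 2*t)) + 3 * Lf t"

lemma dg_r: "dg \<beta> r t = dg \<beta> 0 t + r * (1 - 3*t)"
  by (simp add: dg_def EE_def algebra_simps)

lemma Lf_alt: "0 < t \<Longrightarrow> t < 1/2 \<Longrightarrow> Lf t = ln (1-2*t) - ln t"
  by (simp add: Lf_def ln_div)

lemma DERIV_Lf: assumes "0 < t" "t < 1/2" shows "(Lf has_real_derivative (-1/(t*(1-2*t)))) (at t)"
proof -
  have "((\<lambda>t. ln (1-2*t) - ln t) has_real_derivative (-1/(t*(1-2*t)))) (at t)"
    using assms by (auto intro!: derivative_eq_intros simp: field_simps)
  then show ?thesis
    by (rule has_field_derivative_transform_within_open[where S="{0<..<1/2}"]) (use assms Lf_alt in auto)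
qed

lemma cont_Lf: "continuous_on {0<..<1/2} Lf"
  by (rule DERIV_continuous_on, rule has_field_derivative_at_within, rule DERIV_Lf) auto

lemma Lf_third: "Lf (1/3) = 0" by (simp add: Lf_def)

lemma DERIV_dg: assumes "0 < t" "t < 1/2" "\<beta> \<noteq> 0"
  shows "(dg \<beta> r has_real_derivative (3 * Df r t - (2/\<beta>) * Lf t)) (at t)"
proof -
  have D: "(dg \<beta> r has_real_derivative
     (- (1/2) * (2*(1-2*t)*(-2) + 2*t + 2*t - ((-2)*t + (1-2*t)) - ((-2)*t + (1-2*t)) - 2*t)
      + (1/\<beta>) * ((ln (3*(1-2*t)) + 1) * (-2) + (ln (3*t) + 1) + (ln (3*t) + 1)) + r*(-2) - r)) (at t)"
    unfolding dg_def EE_def using assms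
    by (auto intro!: derivative_eq_intros DERIV_ent_comp simp: algebra_simps power2_eq_square)
       (simp add: field_simps)
  have l: "ln (3*(1-2*t)) = ln 3 + ln (1-2*t)" "ln (3*t) = ln 3 + ln t"
    using assms ln_mult[of 3 "1-2*t"] ln_mult[of 3 t] by simp_all
  show ?thesis
    by (rule DERIV_cong[OF D]) (unfold l, simp add: Lf_alt[OF assms(1,2)] Df_def field_simps, simp add: add_divide_distrib[symmetric])
qed

lemma cont_dg: "continuous_on {0..1/2} (dg \<beta> r)"
  unfolding dg_def by (intro cont_EE continuous_intros) auto

lemma aux_frac: "(g::real) \<noteq> 0 \<Longrightarrow> - ((-3) * g - X) / g\<^sup>2 + 3 * (-1/g) = X / g\<^sup>2"
  by (simp add: field_simps power2_eq_square)

lemma DERIV_Nf: assumes "0 < t" "t < 1/2"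
  shows "(Nf r has_real_derivative (Df r t * (1 - 4*t) / (t*(1-2*t))\<^sup>2)) (at t)"
proof -
  have p: "t * (1 - 2*t) > 0" using assms by simp
  have D: "(Nf r has_real_derivative
     (- ((-3) * (t * (1 - 2*t)) - Df r t * (1 - 4*t)) / (t * (1 - 2*t))\<^sup>2 + 3 * (-1/(t*(1-2*t))))) (at t)"
    unfolding Nf_def Df_def using assms p
    by (auto intro!: derivative_eq_intros DERIV_Lf simp: power2_eq_square) (simp add: algebra_simps)
  show ?thesis
    by (rule DERIV_cong[OF D], rule aux_frac) (use p in auto)
qed

lemma cont_Nf: "continuous_on {0<..<1/2} (Nf r)"
  by (rule DERIV_continuous_on, rule has_field_derivative_at_within, rule DERIV_Nf) auto

lemma DERIV_Rf: assumes "0 < t" "t < 1/2" "Df r t \<noteq> 0"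
  shows "(Rf r has_real_derivative (Nf r t / (Df r t)\<^sup>2)) (at t)"
proof -
  have p: "t * (1 - 2*t) > 0" using assms by simp
  have D: "(Rf r has_real_derivative
     ((-1/(t*(1-2*t))) * Df r t - Lf t * (-3)) / (Df r t * Df r t)) (at t)"
    unfolding Rf_def using assms
    by (auto intro!: derivative_eq_intros DERIV_Lf simp: Df_def)
  show ?thesis
    by (rule DERIV_cong[OF D]) (use p assms in \<open>simp add: Nf_def power2_eq_square field_simps\<close>)
qed

lemma cont_Rf: "(\<And>t. t \<in> S \<Longrightarrow> 0 < t \<and> t < 1/2 \<and> Df r t \<noteq> 0) \<Longrightarrow> continuous_on S (Rf r)"
  by (rule DERIV_continuous_on, rule has_field_derivative_at_within, rule DERIV_Rf) auto


lemma ff_Rf: "ff r t = 2/3 * Rf r t"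
  by (simp add: ff_def Rf_def Df_def Lf_def)

lemma Nf_pos_up: assumes r: "r > 0" and t: "1/3 \<le> t" "t < 1/2" shows "Nf r t > 0"
proof -
  have n3: "Nf r (1/3) = 9 * r" by (simp add: Nf_def Df_def Lf_def)
  show ?thesis
  proof (cases "t = 1/3")
    case True show ?thesis unfolding True using n3 r by simp
  next
    case False
    then have t3: "1/3 < t" using t by simp
    have "Nf r (1/3) < Nf r t"
    proof (rule DERIV_pos_imp_increasing_open[OF t3])
      fix s assume s: "1/3 < s" "s < t"
      have "Df r s < 0" using s r by (simp add: Df_def)
      moreover have "1 - 4* s < 0" using s by simp
      moreover have "(s*(1-2* s))\<^sup>2 > 0" using s t by simp
      ultimately have "Df r s * (1 - 4* s) / (s*(1-2* s))\<^sup>2 > 0"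
        by (simp add: mult_neg_neg)
      then show "\<exists>y. (Nf r has_real_derivative y) (at s) \<and> 0 < y"
        using s t by (intro exI[of _ "Df r s * (1 - 4 * s) / (s * (1 - 2 * s))\<^sup>2"] conjI DERIV_Nf) auto
    next
      show "continuous_on {1/3..t} (Nf r)"
        by (rule continuous_on_subset[OF cont_Nf]) (use t in auto)
    qed
    then show ?thesis using n3 r by simp
  qed
qed

lemma Rf_mono_up: assumes r: "r > 0" and ab: "1/3 \<le> a" "a < b" "b < 1/2" shows "Rf r a < Rf r b"
proof (rule DERIV_pos_imp_increasing_open[OF ab(2)])
  fix s assume s: "a < s" "s < b"
  have D: "Df r s \<noteq> 0" using s ab r by (simp add: Df_def)
  have "Nf r s / (Df r s)\<^sup>2 > 0" using Nf_pos_up[OF r, of s] s ab D by simp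
  then show "\<exists>y. (Rf r has_real_derivative y) (at s) \<and> 0 < y"
    using s ab D by (intro exI[of _ "Nf r s / (Df r s)\<^sup>2"] conjI DERIV_Rf) auto
next
  show "continuous_on {a..b} (Rf r)"
    by (rule cont_Rf) (use ab r in \<open>auto simp: Df_def\<close>)
qed

context fixes \<beta> :: real assumes b2: "\<beta> > 2"
begin

lemma qb_props: assumes r: "r > 0"
  shows "1/3 < qb \<beta> r \<and> qb \<beta> r < 1/2 \<and> Rf r (qb \<beta> r) = 3*\<beta>/2"
proof -
  define E where "E = exp (3*\<beta>*(r+1/2)/2)"
  have E1: "E > 1" using b2 r by (simp add: E_def)
  define t1 where "t1 = E / (1 + 2*E)"
  have t1: "1/3 < t1" "t1 < 1/2" using E1 by (simp_all add: t1_def field_simps)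
  have Lt1: "Lf t1 = - (3*\<beta>*(r+1/2)/2)"
  proof -
    have "(1 - 2*t1)/t1 = 1/E" using E1 by (simp add: t1_def field_simps)
    then show ?thesis by (simp add: Lf_def E_def ln_div)
  qed
  have Dt1: "- Df r t1 > 0" "- Df r t1 \<le> r + 1/2" using t1 r by (simp_all add: Df_def)
  have R1: "Rf r t1 \<ge> 3*\<beta>/2"
  proof -
    have "Rf r t1 = (3*\<beta>*(r+1/2)/2) / (- Df r t1)" by (simp add: Rf_def Lt1)
    also have "\<dots> \<ge> (3*\<beta>*(r+1/2)/2) / (r + 1/2)"
      using Dt1 b2 r by (intro divide_left_mono mult_pos_pos) auto
    also have "(3*\<beta>*(r+1/2)/2) / (r + 1/2) = 3*\<beta>/2" using r by (simp add: field_simps)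
    finally show ?thesis .
  qed
  have R3: "Rf r (1/3) = 0" by (simp add: Rf_def Lf_third)
  have "\<exists>t\<ge>1/3. t \<le> t1 \<and> Rf r t = 3*\<beta>/2"
  proof (rule IVT)
    show "Rf r (1/3) \<le> 3*\<beta>/2" using R3 b2 by simp
    show "3*\<beta>/2 \<le> Rf r t1" by (rule R1)
    show "1/3 \<le> t1" using t1 by simp
    show "\<forall>x. 1/3 \<le> x \<and> x \<le> t1 \<longrightarrow> isCont (Rf r) x"
    proof (intro allI impI)
      fix x assume x: "1/3 \<le> x \<and> x \<le> t1"
      have "Df r x \<noteq> 0" using x r by (simp add: Df_def)
      then show "isCont (Rf r) x" using x t1 by (intro DERIV_isCont[OF DERIV_Rf]) auto
    qed
  qed
  then obtain t where t: "1/3 \<le> t" "t \<le> t1" "Rf r t = 3*\<beta>/2" by blast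
  have tne: "t \<noteq> 1/3"
  proof
    assume "t = 1/3" then have "Rf r t = Rf r (1/3)" by (rule arg_cong)
    then show False using t(3) R3 b2 by simp
  qed
  have "qb \<beta> r = t"
    unfolding qb_def
  proof (rule the_equality)
    show "1/3 < t \<and> t < 1/2 \<and> ff r t = \<beta>" using t tne t1 by (simp add: ff_Rf)
  next
    fix s assume s: "1/3 < s \<and> s < 1/2 \<and> ff r s = \<beta>"
    then have Rs: "Rf r s = 3*\<beta>/2" by (simp add: ff_Rf)
    show "s = t"
    proof (rule ccontr)
      assume "s \<noteq> t"
      then consider "s < t" | "t < s" by linarith
      then show False
        using Rf_mono_up[OF r, of s t] Rf_mono_up[OF r, of t s] s t t1 Rs by (cases; auto)
    qed
  qed
  then show ?thesis using t tne t1 by simp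
qed

lemma Lf_Rf: "Df r t \<noteq> 0 \<Longrightarrow> Lf t = Rf r t * Df r t"
  by (simp add: Rf_def)

lemma dg_deriv_sign:
  assumes "1/3 < s" "s < 1/2" "r > 0"
  shows "(dg \<beta> r has_real_derivative (Df r s * (3 - (2/\<beta>) * Rf r s))) (at s)"
proof -
  have "Df r s \<noteq> 0" using assms by (simp add: Df_def)
  then have e: "3 * Df r s - (2/\<beta>) * Lf s = Df r s * (3 - (2/\<beta>) * Rf r s)"
    by (simp add: Lf_Rf algebra_simps)
  show ?thesis using DERIV_dg[of s \<beta> r] assms b2 e by simp
qed

lemma dg_min: assumes r: "r > 0" and t: "1/3 \<le> t" "t \<le> 1/2" "t \<noteq> qb \<beta> r"
  shows "dg \<beta> r (qb \<beta> r) < dg \<beta> r t"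
proof -
  let ?q = "qb \<beta> r"
  have q: "1/3 < ?q" "?q < 1/2" "Rf r ?q = 3*\<beta>/2" using qb_props[OF r] by auto
  consider "t < ?q" | "?q < t" using t by linarith
  then show ?thesis
  proof cases
    case 1
    have "dg \<beta> r t > dg \<beta> r ?q"
    proof (rule DERIV_neg_imp_decreasing_open[OF 1])
      fix s assume s: "t < s" "s < ?q"
      have "Rf r s < 3*\<beta>/2" using Rf_mono_up[OF r, of s ?q] s t q by simp
      then have "(2/\<beta>) * Rf r s < 3" using b2 by (simp add: field_simps)
      moreover have "Df r s < 0" using s t r by (simp add: Df_def)
      ultimately have "Df r s * (3 - (2/\<beta>) * Rf r s) < 0" by (simp add: mult_neg_pos)
      then show "\<exists>y. (dg \<beta> r has_real_derivative y) (at s) \<and> y < 0"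
        using s t q r by (intro exI[of _ "Df r s * (3 - (2/\<beta>) * Rf r s)"] conjI dg_deriv_sign) auto
    next
      show "continuous_on {t..?q} (dg \<beta> r)"
        by (rule continuous_on_subset[OF cont_dg]) (use t q in auto)
    qed
    then show ?thesis by simp
  next
    case 2
    show "dg \<beta> r ?q < dg \<beta> r t"
    proof (rule DERIV_pos_imp_increasing_open[OF 2])
      fix s assume s: "?q < s" "s < t"
      have "Rf r s > 3*\<beta>/2" using Rf_mono_up[OF r, of ?q s] s t q by simp
      then have "(2/\<beta>) * Rf r s > 3" using b2 by (simp add: field_simps)
      moreover have "Df r s < 0" using s q r by (simp add: Df_def)
      ultimately have "Df r s * (3 - (2/\<beta>) * Rf r s) > 0" by (simp add: mult_neg_neg)
      then show "\<exists>y. (dg \<beta> r has_real_derivative y) (at s) \<and> 0 < y"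
        using s t q r by (intro exI[of _ "Df r s * (3 - (2/\<beta>) * Rf r s)"] conjI dg_deriv_sign) auto
    next
      show "continuous_on {?q..t} (dg \<beta> r)"
        by (rule continuous_on_subset[OF cont_dg]) (use t q in auto)
    qed
  qed
qed

lemma h0_dg: "h0 \<beta> r = dg \<beta> r (qb \<beta> r)"
  by (simp add: h0_def sigma0_def Fb_EE dg_def)

lemma tstar_ex: "\<exists>ts. 1/3 < ts \<and> ts \<le> 1/2 \<and> (\<forall>t\<in>{1/3..1/2}. dg \<beta> 0 ts \<le> dg \<beta> 0 t)"
proof -
  obtain ts where ts: "ts \<in> {1/3..1/2::real}" "\<forall>t\<in>{1/3..1/2}. dg \<beta> 0 ts \<le> dg \<beta> 0 t"
    using continuous_attains_inf[of "{1/3..1/2::real}" "dg \<beta> 0"]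
      continuous_on_subset[OF cont_dg[of \<beta> 0], of "{1/3..1/2}"] by auto
  define t2 where "t2 = (1/3 + (1 - ll \<beta>)/2)/2"
  have l3: "ll \<beta> < 1/3" using ll_third[OF b2] .
  have lp: "ll \<beta> > 0" using ll_pos[OF b2] .
  have t2: "1/3 < t2" "t2 < (1 - ll \<beta>)/2" "t2 < 1/2" using l3 lp unfolding t2_def by (simp_all add: field_simps)
  have "dg \<beta> 0 (1/3) > dg \<beta> 0 t2"
  proof (rule DERIV_neg_imp_decreasing_open[OF t2(1)])
    fix s assume s: "1/3 < s" "s < t2"
    have s12: "0 < 1 - 2* s" using s t2 by simp
    have "ln (s/(1-2* s)) \<le> s/(1-2* s) - 1" using s s12 by (intro ln_le_minus_one) simp
    moreover have "ln (s/(1-2* s)) = - Lf s" using s s12 by (simp add: Lf_def ln_div)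
    moreover have "s/(1-2* s) - 1 = (3* s - 1)/(1-2* s)" using s12 by (simp add: field_simps)
    ultimately have L: "- Lf s \<le> (3* s - 1)/(1-2* s)" by simp
    have "1 - 2* s > ll \<beta>" using s t2 by simp
    then have "\<beta> * (1 - 2* s) > 2/3" using b2 by (simp add: ll_def field_simps)
    then have "2 / (\<beta> * (1 - 2* s)) < 3" using b2 s12 by (simp add: field_simps)
    then have "(2 / (\<beta> * (1 - 2* s))) * (3* s - 1) < 3 * (3* s - 1)"
      using s by (intro mult_strict_right_mono) auto
    moreover have "(2/\<beta>) * ((3* s - 1)/(1-2* s)) = (2 / (\<beta> * (1 - 2* s))) * (3* s - 1)"
      by simp
    ultimately have "(2/\<beta>) * ((3* s - 1)/(1-2* s)) < 3 * (3* s - 1)" by simp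
    moreover have "(2/\<beta>) * (- Lf s) \<le> (2/\<beta>) * ((3* s - 1)/(1-2* s))"
      using L b2 by (intro mult_left_mono) auto
    ultimately have "3 * Df 0 s - (2/\<beta>) * Lf s < 0" by (simp add: Df_def algebra_simps)
    then show "\<exists>y. (dg \<beta> 0 has_real_derivative y) (at s) \<and> y < 0"
      using s t2 b2 by (intro exI[of _ "3 * Df 0 s - (2/\<beta>) * Lf s"] conjI DERIV_dg) auto
  next
    show "continuous_on {1/3..t2} (dg \<beta> 0)"
      by (rule continuous_on_subset[OF cont_dg]) (use t2 in auto)
  qed
  moreover have "dg \<beta> 0 ts \<le> dg \<beta> 0 t2" using ts t2 by auto
  ultimately have "ts \<noteq> 1/3" by (metis order.strict_iff_not)
  then have "1/3 < ts" "ts \<le> 1/2" using ts by auto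
  then show ?thesis using ts by blast
qed

end

lemma exp_cubic: assumes "(t::real) \<ge> 0" shows "1 + t + t\<^sup>2/2 + t^3/6 \<le> exp t"
proof -
  have "(\<lambda>x. exp x - (1 + x + x\<^sup>2/2 + x^3/6)) 0 \<le> (\<lambda>x. exp x - (1 + x + x\<^sup>2/2 + x^3/6)) t"
  proof (rule DERIV_nonneg_imp_nondecreasing[OF assms])
    fix x :: real assume x: "0 \<le> x" "x \<le> t"
    have "((\<lambda>x. exp x - (1 + x + x\<^sup>2/2 + x^3/6)) has_real_derivative (exp x - (1 + x + x\<^sup>2/2))) (at x)"
      by (auto intro!: derivative_eq_intros simp: power2_eq_square power3_eq_cube field_simps)
    moreover have "exp x - (1 + x + x\<^sup>2/2) \<ge> 0" using exp_lower_Taylor_quadratic[OF x(1)] by simp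
    ultimately show "\<exists>y. ((\<lambda>x. exp x - (1 + x + x\<^sup>2/2 + x^3/6)) has_real_derivative y) (at x) \<and> y \<ge> 0"
      by blast
  qed
  then show ?thesis by simp
qed

definition rho :: "real \<Rightarrow> real" where "rho t = t / (exp t - 1)"

lemma T1: assumes t: "0 < t" "t \<le> 3/2" shows "3 * rho t + t \<le> 3"
proof -
  have e1: "exp t - 1 > 0" using t by simp
  have P: "exp t \<ge> 1 + t + t\<^sup>2/2 + t^3/6" using exp_cubic t by simp
  have "(3 - t) * (1 + t + t\<^sup>2/2 + t^3/6) = 3 + 2*t + t\<^sup>2 * (3 - t\<^sup>2) / 6"
    by (simp add: power2_eq_square power3_eq_cube field_simps)
  moreover have "t\<^sup>2 * (3 - t\<^sup>2) / 6 \<ge> 0"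
  proof -
    have "t\<^sup>2 \<le> (3/2)\<^sup>2" using t by (intro power_mono) auto
    then show ?thesis by (intro divide_nonneg_pos mult_nonneg_nonneg) (auto simp: power2_eq_square)
  qed
  moreover have "(3 - t) * exp t \<ge> (3 - t) * (1 + t + t\<^sup>2/2 + t^3/6)"
    using P t by (intro mult_left_mono) auto
  ultimately have "(3 - t) * exp t \<ge> 3 + 2*t" by linarith
  then have "3 * t \<le> (3 - t) * (exp t - 1)" by (simp add: algebra_simps)
  then have "3 * t / (exp t - 1) \<le> 3 - t" using e1 by (simp add: field_simps)
  then show ?thesis by (simp add: rho_def)
qed

lemma T2: assumes ab: "3/2 \<le> a" "a < b" shows "a + 3 * rho a < b + 3 * rho b"
proof -
  define e0 where "e0 = exp (3/2::real)"
  have e0: "e0 \<ge> 1 + 3/2 + (3/2)\<^sup>2/2 + (3/2)^3/6" unfolding e0_def by (rule exp_cubic) simp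
  then have e0': "e0 \<ge> 67/16" by (simp add: power2_eq_square power3_eq_cube)
  have kpos: "exp x + 1 - 2 / exp x - 3 * x > 0" if x: "x \<ge> 3/2" for x :: real
  proof -
    have "exp x = e0 * exp (x - 3/2)" unfolding e0_def by (simp add: exp_diff)
    also have "\<dots> \<ge> e0 * (1 + (x - 3/2))" using e0' exp_ge_add_one_self[of "x - 3/2"] by (intro mult_left_mono) auto
    finally have ex: "exp x \<ge> e0 * (x - 1/2)" by (simp add: algebra_simps)
    have "e0 * (x - 1/2) - 3 * x = (e0 - 3) * (x - 3/2) + e0 - 9/2" by (simp add: field_simps)
    moreover have "(e0 - 3) * (x - 3/2) \<ge> 0" using e0' x by simp
    ultimately have A: "exp x - 3 * x \<ge> e0 - 9/2" using ex by linarith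
    have "2 / exp x \<le> 2 / e0" using ex e0' x
      by (intro divide_left_mono) (auto simp: e0_def)
    also have "2 / e0 \<le> 2 / (67/16)" using e0' by (intro divide_left_mono) auto
    finally have B: "2 / exp x \<le> 32/67" by simp
    show ?thesis using A B e0' by linarith
  qed
  show ?thesis
  proof (rule DERIV_pos_imp_increasing_open[OF ab(2)])
    fix x assume x: "a < x" "x < b"
    have e1: "exp x - 1 > 0" using x ab by simp
    have D: "((\<lambda>t. t + 3 * rho t) has_real_derivative
        (1 + 3 * ((exp x - 1) - x * exp x) / (exp x - 1)\<^sup>2)) (at x)"
      unfolding rho_def using e1
      by (auto intro!: derivative_eq_intros simp: power2_eq_square field_simps)
    have k: "exp x + 1 - 2 / exp x - 3 * x > 0" using kpos x ab by simp
    have "(exp x - 1)\<^sup>2 + 3 * ((exp x - 1) - x * exp x) = exp x * (exp x + 1 - 2 / exp x - 3 * x)"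
      by (simp add: power2_eq_square field_simps)
    also have "\<dots> > 0" using k by simp
    finally have "1 + 3 * ((exp x - 1) - x * exp x) / (exp x - 1)\<^sup>2 > 0"
      using e1 by (simp add: field_simps)
    then show "\<exists>y. ((\<lambda>t. t + 3 * rho t) has_real_derivative y) (at x) \<and> 0 < y" using D by blast
  next
    have "\<forall>x\<in>{a..b}. isCont (\<lambda>t. t + 3 * rho t) x"
      using ab unfolding rho_def by (auto intro!: continuous_intros)
    then show "continuous_on {a..b} (\<lambda>t. t + 3 * rho t)" by (rule continuous_at_imp_continuous_on)
  qed
qed


definition Phi :: "real \<Rightarrow> real \<Rightarrow> real \<Rightarrow> real" where
  "Phi \<beta> r y = HH \<beta> (y - 3*r/2) + HH \<beta> y + KK \<beta> y"

context fixes \<beta> :: real assumes b2: "\<beta> > 2"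
begin

lemma HH_mono: assumes "u < v" "v \<le> gg \<beta>" shows "HH \<beta> u < HH \<beta> v"
proof -
  have h1: "0 < HH \<beta> u \<and> HH \<beta> u \<le> ll \<beta> \<and> GG \<beta> (HH \<beta> u) = u" using HH_ex[OF b2] assms by simp
  have h2: "0 < HH \<beta> v \<and> HH \<beta> v \<le> ll \<beta> \<and> GG \<beta> (HH \<beta> v) = v" using HH_ex[OF b2] assms by simp
  show ?thesis
  proof (rule ccontr)
    assume "\<not> ?thesis"
    then have "HH \<beta> v \<le> HH \<beta> u" by simp
    then have "GG \<beta> (HH \<beta> v) \<le> GG \<beta> (HH \<beta> u)"
      using GG_inc[OF b2, of "HH \<beta> v" "HH \<beta> u"] h1 h2 by (cases "HH \<beta> v = HH \<beta> u") auto
    then show False using h1 h2 assms by simp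
  qed
qed

lemma KK_mono: assumes "u < v" "v \<le> gg \<beta>" shows "KK \<beta> v < KK \<beta> u"
proof -
  have h1: "ll \<beta> \<le> KK \<beta> u \<and> GG \<beta> (KK \<beta> u) = u" using KK_ex[OF b2] assms by simp
  have h2: "ll \<beta> \<le> KK \<beta> v \<and> GG \<beta> (KK \<beta> v) = v" using KK_ex[OF b2] assms by simp
  show ?thesis
  proof (rule ccontr)
    assume "\<not> ?thesis"
    then have "KK \<beta> u \<le> KK \<beta> v" by simp
    then have "GG \<beta> (KK \<beta> v) \<le> GG \<beta> (KK \<beta> u)"
      using GG_dec[OF b2, of "KK \<beta> u" "KK \<beta> v"] h1 h2 by (cases "KK \<beta> v = KK \<beta> u") auto
    then show False using h1 h2 assms by simp
  qed
qed

lemma root_props: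
  assumes r: "r > 0" and y: "y \<le> gg \<beta>" and P: "Phi \<beta> r y = 1"
  defines "x \<equiv> HH \<beta> y" and "z \<equiv> KK \<beta> y" and "x' \<equiv> HH \<beta> (y - 3*r/2)"
    and "t \<equiv> 3*\<beta>/2 * (KK \<beta> y - HH \<beta> y)"
  shows "y < gg \<beta> \<and> 0 < x' \<and> x' < x \<and> x < ll \<beta> \<and> ll \<beta> < z \<and> z = x + t / (3*\<beta>/2)
     \<and> x = rho t / (3*\<beta>/2) \<and> 3/2 < t"
proof -
  have hx: "0 < x \<and> x \<le> ll \<beta> \<and> GG \<beta> x = y" using HH_ex[OF b2 y] by (simp add: x_def)
  have hz: "ll \<beta> \<le> z \<and> GG \<beta> z = y" using KK_ex[OF b2 y] by (simp add: z_def)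
  have hx': "0 < x' \<and> x' \<le> ll \<beta> \<and> GG \<beta> x' = y - 3*r/2" using HH_ex[OF b2, of "y - 3*r/2"] y r
    by (simp add: x'_def)
  have sum: "x' + x + z = 1" using P by (simp add: Phi_def x_def z_def x'_def)
  have lt: "ll \<beta> < 1/3" using ll_third[OF b2] .
  have ygg: "y < gg \<beta>"
  proof (rule ccontr)
    assume "\<not> y < gg \<beta>" then have "y = gg \<beta>" using y by simp
    then have "x = ll \<beta>" "z = ll \<beta>" using HH_eq[OF b2, of "ll \<beta>" y] KK_eq[OF b2, of "ll \<beta>" y] ll_pos[OF b2]
      by (simp_all add: x_def z_def gg_def)
    then show False using sum hx' lt by linarith
  qed
  have xl: "x < ll \<beta>"
  proof -
    have "x \<noteq> ll \<beta>" proof assume "x = ll \<beta>" then have "GG \<beta> x = gg \<beta>" by (simp add: gg_def)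
      then show False using hx ygg by simp qed
    then show ?thesis using hx by simp
  qed
  have zl: "ll \<beta> < z"
  proof -
    have "z \<noteq> ll \<beta>" proof assume "z = ll \<beta>" then have "GG \<beta> z = gg \<beta>" by (simp add: gg_def)
      then show False using hz ygg by simp qed
    then show ?thesis using hz by simp
  qed
  have x'x: "x' < x" using HH_mono[of "y - 3*r/2" y] r ygg by (simp add: x_def x'_def)
  have tdef: "t = 3*\<beta>/2 * (z - x)" by (simp add: t_def x_def z_def)
  have "z - x > 0" using xl zl by simp
  then have "3*\<beta>/2 * (z - x) > 0" using b2 by simp
  then have tpos: "t > 0" using tdef by simp
  have "ln z / \<beta> - 3/2 * z = ln x / \<beta> - 3/2 * x" using hx hz by (simp add: GG_alt)
  then have "ln z - ln x = 3*\<beta>/2 * (z - x)" using b2 by (simp add: field_simps)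
  then have lzx: "ln (z / x) = t" using hx hz ll_pos[OF b2] tdef by (simp add: ln_div)
  have zx: "z = x * exp t"
  proof -
    have "z / x = exp t" using lzx hx hz ll_pos[OF b2] by (metis exp_ln divide_pos_pos order.strict_trans2)
    then show ?thesis using hx by (simp add: field_simps)
  qed
  have zt: "z = x + t / (3*\<beta>/2)" using tdef b2 by (simp add: field_simps)
  have e1: "exp t - 1 > 0" using tpos by simp
  have xr: "x = rho t / (3*\<beta>/2)"
  proof -
    have "x * (exp t - 1) = t / (3*\<beta>/2)" using zx zt by (simp add: algebra_simps)
    then show ?thesis using e1 b2 by (simp add: rho_def field_simps)
  qed
  have t32: "3/2 < t"
  proof (rule ccontr)
    assume "\<not> 3/2 < t"
    then have "3 * rho t + t \<le> 3" using T1 tpos by simp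
    moreover have "1 < 3 * x + t / (3*\<beta>/2)" using sum x'x zt by linarith
    moreover have "3 * x + t / (3*\<beta>/2) = (3 * rho t + t) / (3*\<beta>/2)" by (subst xr) (simp add: add_divide_distrib)
    moreover have "(3 * rho t + t) / (3*\<beta>/2) \<le> 3 / (3*\<beta>/2)"
      using calculation(1) b2 by (intro divide_right_mono) auto
    ultimately have "1 < 3 / (3*\<beta>/2)" by argo
    then show False using b2 by (simp add: field_simps)
  qed
  show ?thesis using ygg hx' x'x xl zl zt xr t32 by simp
qed

lemma GG_incr_decr: assumes "0 < p1" "p1 < p2" "d > 0"
  shows "GG \<beta> (p2 + d) - GG \<beta> p2 \<le> GG \<beta> (p1 + d) - GG \<beta> p1"
proof -
  have "ln ((p2 + d)/p2) \<le> ln ((p1 + d)/p1)"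
    using assms by (subst ln_le_cancel_iff) (auto simp: field_simps intro!: mult_left_mono)
  then have "ln (p2 + d) - ln p2 \<le> ln (p1 + d) - ln p1" using assms by (simp add: ln_div)
  then have "(ln (p2 + d) - ln p2)/\<beta> \<le> (ln (p1 + d) - ln p1)/\<beta>" using b2 by (simp add: divide_right_mono)
  moreover have e: "\<And>p. GG \<beta> (p + d) - GG \<beta> p = (ln (p + d) - ln p)/\<beta> - (3/2)*d"
    by (simp add: GG_alt diff_divide_distrib algebra_simps)
  ultimately show ?thesis unfolding e by argo
qed

lemma two_roots_False:
  assumes r: "r > 0" and y: "ya < yb" "yb \<le> gg \<beta>" and P: "Phi \<beta> r ya = 1" "Phi \<beta> r yb = 1"
  shows False
proof -
  have ya: "ya \<le> gg \<beta>" using y by simp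
  note Ra = root_props[OF r ya P(1)] and Rb = root_props[OF r y(2) P(2)]
  define a where "a = 3*\<beta>/2"
  have a3: "a > 3" using b2 by (simp add: a_def)
  define xa where "xa = HH \<beta> ya"
  define xb where "xb = HH \<beta> yb"
  define za where "za = KK \<beta> ya"
  define zb where "zb = KK \<beta> yb"
  define xa' where "xa' = HH \<beta> (ya - 3*r/2)"
  define xb' where "xb' = HH \<beta> (yb - 3*r/2)"
  define ta where "ta = 3*\<beta>/2 * (KK \<beta> ya - HH \<beta> ya)"
  define tb where "tb = 3*\<beta>/2 * (KK \<beta> yb - HH \<beta> yb)"
  have A: "0 < xa'" "xa' < xa" "xa < ll \<beta>" "za = xa + ta / a" "xa = rho ta / a" "3/2 < ta"
    using Ra unfolding xa_def za_def xa'_def ta_def a_def by auto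
  have B: "0 < xb'" "xb' < xb" "xb < ll \<beta>" "zb = xb + tb / a" "xb = rho tb / a" "3/2 < tb"
    using Rb unfolding xb_def zb_def xb'_def tb_def a_def by auto
  have xab: "xa < xb" unfolding xa_def xb_def by (rule HH_mono[OF y])
  have zab: "zb < za" unfolding za_def zb_def by (rule KK_mono[OF y])
  have tab: "tb < ta" unfolding ta_def tb_def using xab zab b2 unfolding xa_def xb_def za_def zb_def
    by (simp add: mult_strict_left_mono)
  have gxa: "GG \<beta> xa = ya" "GG \<beta> xb = yb" "GG \<beta> xa' = ya - 3*r/2" "GG \<beta> xb' = yb - 3*r/2"
    using HH_ex[OF b2, of ya] HH_ex[OF b2, of yb] HH_ex[OF b2, of "ya - 3*r/2"] HH_ex[OF b2, of "yb - 3*r/2"] y r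
    unfolding xa_def xb_def xa'_def xb'_def by auto
  have xab': "xa' < xb'" unfolding xa'_def xb'_def using y r by (intro HH_mono) auto
  have lip: "xb' - xa' \<le> xb - xa"
  proof (rule ccontr)
    assume nl: "\<not> xb' - xa' \<le> xb - xa"
    define d where "d = xb - xa"
    have d: "d > 0" "xa' + d < xb'" using xab nl by (auto simp: d_def)
    have "GG \<beta> (xa + d) - GG \<beta> xa \<le> GG \<beta> (xa' + d) - GG \<beta> xa'"
      using A d by (intro GG_incr_decr) auto
    moreover have "GG \<beta> (xa' + d) < GG \<beta> xb'"
      using GG_inc[OF b2, of "xa' + d" xb'] d A B by simp
    moreover have "xa + d = xb" by (simp add: d_def)
    ultimately show False using gxa by simp
  qed
  have sa: "xa' + xa + za = 1" using P(1) by (simp add: Phi_def xa_def xa'_def za_def)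
  have sb: "xb' + xb + zb = 1" using P(2) by (simp add: Phi_def xb_def xb'_def zb_def)
  have "ta / a - tb / a \<le> 3 * (xb - xa)" using sa sb A(4) B(4) lip by argo
  also have "3 * (xb - xa) = 3 * rho tb / a - 3 * rho ta / a" using A(5) B(5) by (simp add: algebra_simps)
  finally have h: "ta / a - tb / a \<le> 3 * rho tb / a - 3 * rho ta / a" .
  have "(ta + 3 * rho ta) / a \<le> (tb + 3 * rho tb) / a" unfolding add_divide_distrib using h by argo
  then have "ta + 3 * rho ta \<le> tb + 3 * rho tb" using a3 by (simp add: divide_le_cancel)
  moreover have "tb + 3 * rho tb < ta + 3 * rho ta" using T2[of tb ta] B(6) tab by simp
  ultimately show False by simp
qed

lemma y2_eq: assumes r: "r > 0" and y: "y \<le> gg \<beta>" and P: "Phi \<beta> r y = 1"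
  shows "y2 \<beta> r = y"
  unfolding y2_def
proof (rule the_equality)
  show "y \<le> gg \<beta> \<and> HH \<beta> (y - 3 * r / 2) + HH \<beta> y + KK \<beta> y = 1" using y P by (simp add: Phi_def)
next
  fix y' assume y': "y' \<le> gg \<beta> \<and> HH \<beta> (y' - 3 * r / 2) + HH \<beta> y' + KK \<beta> y' = 1"
  then have P': "Phi \<beta> r y' = 1" by (simp add: Phi_def)
  show "y' = y"
  proof (rule ccontr)
    assume "y' \<noteq> y"
    then consider "y' < y" | "y < y'" by linarith
    then show False
      using two_roots_False[OF r, of y' y] two_roots_False[OF r, of y y'] y y' P P' by (cases; auto)
  qed
qed

end

lemma hh_Nf: assumes "0 < t" "t < 1/2" shows "hh t - r = - (t * (1 - 2*t)) * Nf r t"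
  using assms by (simp add: hh_def Nf_def Df_def Lf_def field_simps)

lemma Nf_kk: assumes "0 < r" "r < 1" shows "Nf r (kk r) > 0"
proof -
  have k: "0 < kk r" "kk r < 1/3" using assms by (auto simp: kk_def)
  have "(1 - 2 * kk r) / kk r > 1" using k by (simp add: field_simps)
  then have "Lf (kk r) > 0" by (simp add: Lf_def)
  moreover have "Df r (kk r) = 0" by (simp add: Df_def kk_def)
  ultimately show ?thesis by (simp add: Nf_def)
qed

lemma Nf_incr: assumes "0 < a" "a < b" "b \<le> 1/4" "b < kk r" shows "Nf r a < Nf r b"
proof (rule DERIV_pos_imp_increasing_open[OF assms(2)])
  fix s assume s: "a < s" "s < b"
  have "Df r s > 0" using s assms by (simp add: Df_def kk_def)
  moreover have "1 - 4 * s > 0" using s assms by simp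
  moreover have "(s * (1 - 2 * s))\<^sup>2 > 0" using s assms by simp
  ultimately have "Df r s * (1 - 4 * s) / (s * (1 - 2 * s))\<^sup>2 > 0" by simp
  then show "\<exists>y. (Nf r has_real_derivative y) (at s) \<and> 0 < y"
    using s assms by (intro exI[of _ "Df r s * (1 - 4 * s) / (s * (1 - 2 * s))\<^sup>2"] conjI DERIV_Nf) auto
next
  show "continuous_on {a..b} (Nf r)" by (rule continuous_on_subset[OF cont_Nf]) (use assms in auto)
qed

lemma Nf_decr: assumes "1/4 \<le> a" "a < b" "b \<le> kk r" "0 < r" shows "Nf r b < Nf r a"
proof (rule DERIV_neg_imp_decreasing_open[OF assms(2)])
  fix s assume s: "a < s" "s < b"
  have "Df r s > 0" using s assms by (simp add: Df_def kk_def)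
  moreover have "1 - 4 * s < 0" using s assms by simp
  moreover have "(s * (1 - 2 * s))\<^sup>2 > 0" using s assms by (simp add: kk_def)
  ultimately have "Df r s * (1 - 4 * s) / (s * (1 - 2 * s))\<^sup>2 < 0" by (intro divide_neg_pos mult_pos_neg)
  then show "\<exists>y. (Nf r has_real_derivative y) (at s) \<and> y < 0"
    using s assms by (intro exI[of _ "Df r s * (1 - 4 * s) / (s * (1 - 2 * s))\<^sup>2"] conjI DERIV_Nf) (auto simp: kk_def)
next
  show "continuous_on {a..b} (Nf r)" by (rule continuous_on_subset[OF cont_Nf]) (use assms in \<open>auto simp: kk_def\<close>)
qed

lemma Nf_small: assumes "0 < r" "r \<le> 1/4" shows "Nf r (1/1000) < 0"
proof -
  have "ln ((1 - 2 * (1/1000)) / (1/1000)) \<le> (27::real)"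
  proof -
    have "(1 - 2 * (1/1000)) / (1/1000) \<le> 1 + 27 + (27::real)\<^sup>2/2 + 27^3/6" by simp
    also have "\<dots> \<le> exp 27" by (rule exp_cubic) simp
    finally have "ln ((1 - 2 * (1/1000)) / (1/1000)) \<le> ln (exp (27::real))" by (subst ln_le_cancel_iff) auto
    then show ?thesis by simp
  qed
  then have L: "Lf (1/1000) \<le> 27" by (simp add: Lf_def)
  have "Df r (1/1000) \<ge> 1/2" using assms by (simp add: Df_def)
  then have "Df r (1/1000) / ((1/1000) * (1 - 2 * (1/1000))) \<ge> (1/2) / ((1/1000) * (1 - 2 * (1/1000)))"
    by (intro divide_right_mono) auto
  then have "Df r (1/1000) / ((1/1000) * (1 - 2 * (1/1000))) \<ge> 500" by simp
  then show ?thesis using L unfolding Nf_def by simp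
qed

lemma Nf_zero_lt: assumes r: "0 < r" "r < 1" and t: "0 < t" "t < kk r" "Nf r t = 0" shows "t < 1/4"
proof (rule ccontr)
  assume "\<not> t < 1/4"
  then have "Nf r (kk r) < Nf r t" using t r by (intro Nf_decr) auto
  then show False using Nf_kk[OF r] t by simp
qed

definition kkr :: "real \<Rightarrow> real" where "kkr r = kk r"

lemma m0_props: assumes r: "0 < r" "r \<le> 1/4"
  shows "0 < m0 r \<and> m0 r < kk r \<and> m0 r < 1/4 \<and> Nf r (m0 r) = 0
     \<and> (\<forall>t. 0 < t \<and> t < m0 r \<longrightarrow> Nf r t < 0) \<and> (\<forall>t. m0 r < t \<and> t \<le> kk r \<longrightarrow> Nf r t > 0)"
proof -
  have r1: "r < 1" using r by simp
  have kpos: "1/1000 < kk r" "kk r < 1/3" using r by (auto simp: kk_def)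
  have "\<exists>t\<ge>1/1000. t \<le> kk r \<and> Nf r t = 0"
  proof (rule IVT)
    show "Nf r (1/1000) \<le> 0" using Nf_small[OF r] by simp
    show "0 \<le> Nf r (kk r)" using Nf_kk[OF r(1) r1] by simp
    show "1/1000 \<le> kk r" using kpos by simp
    show "\<forall>x. 1/1000 \<le> x \<and> x \<le> kk r \<longrightarrow> isCont (Nf r) x"
      using kpos by (auto intro!: DERIV_isCont[OF DERIV_Nf])
  qed
  then obtain t0 where t0: "1/1000 \<le> t0" "t0 \<le> kk r" "Nf r t0 = 0" by blast
  have t0k: "t0 < kk r" using t0 Nf_kk[OF r(1) r1] by (cases "t0 = kk r") auto
  have t0q: "t0 < 1/4" using Nf_zero_lt[OF r(1) r1, of t0] t0 t0k by simp
  have uniq: "s = t0" if s: "0 < s" "s < kk r" "Nf r s = 0" for s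
  proof -
    have "s < 1/4" using Nf_zero_lt[OF r(1) r1, of s] s by simp
    then show ?thesis using Nf_incr[of s t0 r] Nf_incr[of t0 s r] s t0 t0k t0q
      by (cases s t0 rule: linorder_cases) auto
  qed
  have m0: "m0 r = t0"
    unfolding m0_def
  proof (rule the_equality)
    show "0 < t0 \<and> t0 < kk r \<and> hh t0 = r" using t0 t0k hh_Nf[of t0 r] kpos by auto
  next
    fix s assume s: "0 < s \<and> s < kk r \<and> hh s = r"
    then have "Nf r s = 0" using hh_Nf[of s r] kpos by auto
    then show "s = t0" using uniq s by auto
  qed
  have neg: "Nf r t < 0" if "0 < t" "t < t0" for t using Nf_incr[of t t0 r] that t0q t0k t0 by simp
  have pos: "Nf r t > 0" if "t0 < t" "t \<le> kk r" for t
  proof (cases "t \<le> 1/4")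
    case True
    show ?thesis
    proof (cases "t = kk r")
      case True then show ?thesis using Nf_kk[OF r(1) r1] by simp
    next
      case False then show ?thesis using Nf_incr[of t0 t r] that \<open>t \<le> 1/4\<close> t0 by simp
    qed
  next
    case False
    then show ?thesis
    proof (cases "t = kk r")
      case True then show ?thesis using Nf_kk[OF r(1) r1] by simp
    next
      case False
      then have "Nf r (kk r) < Nf r t" using \<open>\<not> t \<le> 1/4\<close> that r by (intro Nf_decr) auto
      then show ?thesis using Nf_kk[OF r(1) r1] by simp
    qed
  qed
  show ?thesis using m0 t0 t0k t0q neg pos by auto
qed

lemma Rf_decr_low: assumes r: "0 < r" "r \<le> 1/4" and ab: "0 < a" "a < b" "b \<le> m0 r"
  shows "Rf r b < Rf r a"
proof -
  note M = m0_props[OF r]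
  show ?thesis
  proof (rule DERIV_neg_imp_decreasing_open[OF ab(2)])
    fix s assume s: "a < s" "s < b"
    have D: "Df r s > 0" using s ab M by (simp add: Df_def kk_def)
    have "Nf r s < 0" using M s ab by auto
    then have "Nf r s / (Df r s)\<^sup>2 < 0" using D by (simp add: divide_neg_pos)
    then show "\<exists>y. (Rf r has_real_derivative y) (at s) \<and> y < 0"
      using s ab M D by (intro exI[of _ "Nf r s / (Df r s)\<^sup>2"] conjI DERIV_Rf) auto
  next
    show "continuous_on {a..b} (Rf r)"
      by (rule cont_Rf) (use ab M in \<open>auto simp: Df_def kk_def\<close>)
  qed
qed

lemma Rf_incr_mid: assumes r: "0 < r" "r \<le> 1/4" and ab: "m0 r \<le> a" "a < b" "b < kk r"
  shows "Rf r a < Rf r b"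
proof -
  note M = m0_props[OF r]
  show ?thesis
  proof (rule DERIV_pos_imp_increasing_open[OF ab(2)])
    fix s assume s: "a < s" "s < b"
    have D: "Df r s > 0" using s ab M by (simp add: Df_def kk_def)
    have "Nf r s > 0" using M s ab by auto
    then have "Nf r s / (Df r s)\<^sup>2 > 0" using D by simp
    then show "\<exists>y. (Rf r has_real_derivative y) (at s) \<and> 0 < y"
      using s ab M D r by (intro exI[of _ "Nf r s / (Df r s)\<^sup>2"] conjI DERIV_Rf) (auto simp: kk_def)
  next
    show "continuous_on {a..b} (Rf r)"
      by (rule cont_Rf) (use ab M r in \<open>auto simp: Df_def kk_def\<close>)
  qed
qed

context fixes \<beta> :: real assumes b2: "\<beta> > 2"
begin

lemma diag_crit_pb:
  assumes r: "0 < r" "r \<le> 1/4" and t: "0 < t" "t < 1/3"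
    and crit: "3 * Df r t - (2/\<beta>) * Lf t = 0"
    and lm: "\<exists>\<epsilon>>0. \<forall>s. t < s \<and> s < t + \<epsilon> \<longrightarrow> dg \<beta> r t \<le> dg \<beta> r s"
  shows "pb \<beta> r = t"
proof -
  note M = m0_props[OF r]
  have Lp: "Lf t > 0"
  proof -
    have "(1 - 2*t)/t > 1" using t by (simp add: field_simps)
    then show ?thesis by (simp add: Lf_def)
  qed
  have "3 * Df r t = (2/\<beta>) * Lf t" using crit by simp
  moreover have "(2/\<beta>) * Lf t > 0" using Lp b2 by simp
  ultimately have Dp: "Df r t > 0" by simp
  have tk: "t < kk r" using Dp by (simp add: Df_def kk_def)
  have Rt: "Rf r t = 3*\<beta>/2" using crit Dp b2 by (simp add: Rf_def field_simps)
  have tm: "t < m0 r"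
  proof (rule ccontr)
    assume "\<not> t < m0 r"
    then have tm: "m0 r \<le> t" by simp
    obtain \<epsilon> where e: "\<epsilon> > 0" "\<forall>s. t < s \<and> s < t + \<epsilon> \<longrightarrow> dg \<beta> r t \<le> dg \<beta> r s" using lm by blast
    define s1 where "s1 = t + min (\<epsilon>/2) ((kk r - t)/2)"
    have "min (\<epsilon>/2) ((kk r - t)/2) \<le> \<epsilon>/2" "min (\<epsilon>/2) ((kk r - t)/2) \<le> (kk r - t)/2"
      "min (\<epsilon>/2) ((kk r - t)/2) > 0" using e tk by (simp_all only: min.cobounded1 min.cobounded2) simp
    then have s1: "t < s1" "s1 < t + \<epsilon>" "s1 < kk r" using e tk unfolding s1_def by argo+
    have "dg \<beta> r t > dg \<beta> r s1"
    proof (rule DERIV_neg_imp_decreasing_open[OF s1(1)])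
      fix s assume s: "t < s" "s < s1"
      have Rs: "Rf r s > 3*\<beta>/2" using Rf_incr_mid[OF r tm, of s] s s1 Rt by simp
      have Ds: "Df r s > 0" using s s1 by (simp add: Df_def kk_def)
      have "3 * Df r s - (2/\<beta>) * Lf s = Df r s * (3 - (2/\<beta>) * Rf r s)"
        using Ds by (simp add: Rf_def field_simps)
      moreover have "(2/\<beta>) * Rf r s > 3" using Rs b2 by (simp add: field_simps)
      ultimately have "3 * Df r s - (2/\<beta>) * Lf s < 0" using Ds by (simp add: mult_pos_neg)
      then show "\<exists>y. (dg \<beta> r has_real_derivative y) (at s) \<and> y < 0"
        using s s1 t b2 M r by (intro exI[of _ "3 * Df r s - (2/\<beta>) * Lf s"] conjI DERIV_dg) (auto simp: kk_def)
    next
      show "continuous_on {t..s1} (dg \<beta> r)"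
        by (rule continuous_on_subset[OF cont_dg]) (use t s1 M r in \<open>auto simp: kk_def\<close>)
    qed
    then show False using e s1 by auto
  qed
  show ?thesis
    unfolding pb_def
  proof (rule the_equality)
    show "0 < t \<and> t < m0 r \<and> ff r t = \<beta>" using t tm Rt by (simp add: ff_Rf)
  next
    fix s assume s: "0 < s \<and> s < m0 r \<and> ff r s = \<beta>"
    then have Rs: "Rf r s = 3*\<beta>/2" by (simp add: ff_Rf)
    show "s = t"
    proof (rule ccontr)
      assume "s \<noteq> t"
      then consider "s < t" | "t < s" by linarith
      then show False using Rf_decr_low[OF r, of s t] Rf_decr_low[OF r, of t s] s t tm Rs Rt
        by (cases; auto)
    qed
  qed
qed

end

lemma comp_min:
  fixes F :: "real \<times> real \<Rightarrow> real" and X A :: "(real \<times> real) set"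
  assumes X: "closed X" "bounded X" "convex X" and cont: "continuous_on X F" and A: "open A"
    and S': "S' = {x\<in>X. F x < h} \<inter> A" and Q: "Q \<in> S'"
    and hA: "\<And>x. x \<in> X \<Longrightarrow> x \<in> closure A \<Longrightarrow> F x < h \<Longrightarrow> x \<in> A"
  shows "\<exists>P \<in> connected_component_set S' Q. \<exists>\<epsilon>>0. \<forall>y\<in>X. dist y P < \<epsilon> \<longrightarrow> F P \<le> F y"
proof -
  define C where "C = connected_component_set S' Q"
  have CS: "C \<subseteq> S'" unfolding C_def by (rule connected_component_subset)
  have QC: "Q \<in> C" using Q unfolding C_def by simp
  have SX: "S' \<subseteq> X" using S' by auto
  have clX: "closure C \<subseteq> X" using CS SX X(1) by (meson closure_minimal order_trans)
  have cpt: "compact (closure C)" using clX X(2)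
    by (simp add: compact_eq_bounded_closed bounded_subset)
  obtain P where P: "P \<in> closure C" "\<forall>y\<in>closure C. F P \<le> F y"
    using continuous_attains_inf[OF cpt _ continuous_on_subset[OF cont clX]] QC closure_subset by blast
  have FP: "F P < h" using P(2) QC closure_subset CS S' by force
  have PX: "P \<in> X" using P clX by auto
  have "P \<in> closure A" using P(1) CS S' closure_mono by blast
  then have PA: "P \<in> A" using hA PX FP by blast
  have PS: "P \<in> S'" using PA PX FP S' by simp
  have op: "openin (top_of_set X) S'"
  proof -
    have "openin (top_of_set X) (X \<inter> F -` {..<h})"
      by (rule continuous_openin_preimage_gen[OF cont]) simp
    then have "openin (top_of_set X) ((X \<inter> F -` {..<h}) \<inter> A)"
      using A by (simp add: openin_Int_open)
    moreover have "(X \<inter> F -` {..<h}) \<inter> A = S'" using S' by auto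
    ultimately show ?thesis by simp
  qed
  obtain \<epsilon> where e: "\<epsilon> > 0" "ball P \<epsilon> \<inter> X \<subseteq> S'"
    using op PS unfolding openin_contains_ball by blast
  define B where "B = ball P \<epsilon> \<inter> X"
  have Bc: "connected B" unfolding B_def by (intro convex_connected convex_Int convex_ball X(3))
  obtain c where c: "c \<in> C" "dist c P < \<epsilon>" using P(1) e(1) unfolding closure_approachable by blast
  have cB: "c \<in> B" using c CS SX unfolding B_def by (auto simp: dist_commute)
  have "connected (C \<union> B)" using Bc cB c(1) by (intro connected_Un) (auto simp: C_def)
  moreover have "C \<union> B \<subseteq> S'" using CS e(2) B_def by auto
  ultimately have "C \<union> B \<subseteq> connected_component_set S' Q"
    using QC by (intro connected_component_maximal) auto
  then have BC: "B \<subseteq> C" unfolding C_def by auto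
  have PB: "P \<in> B" using e PX unfolding B_def by simp
  have "\<forall>y\<in>X. dist y P < \<epsilon> \<longrightarrow> F P \<le> F y"
  proof (intro ballI impI)
    fix y assume "y \<in> X" "dist y P < \<epsilon>"
    then have "y \<in> B" unfolding B_def by (simp add: dist_commute)
    then show "F P \<le> F y" using BC P(2) closure_subset by blast
  qed
  then show ?thesis using PB BC e(1) unfolding C_def by blast
qed

lemma conn_sub:
  assumes "connected W" "W \<subseteq> A \<union> B" "open A" "open B" "A \<inter> B = {}" "W \<inter> A \<noteq> {}"
  shows "W \<subseteq> A"
  using connectedD[OF assms(1,3,4)] assms(2,5,6) by auto

lemma Xi_closed: "closed Xi"
proof -
  have "Xi = {p. 0 \<le> fst p} \<inter> {p. 0 \<le> snd p} \<inter> {p. fst p + snd p \<le> 1}"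
    by (auto simp: Xi_def)
  moreover have "closed \<dots>"
    by (intro closed_Int closed_Collect_le continuous_intros)
  ultimately show ?thesis by simp
qed

lemma Xi_bounded: "bounded Xi"
proof -
  have "Xi \<subseteq> cball 0 2"
  proof
    fix p assume "p \<in> Xi"
    then obtain a b where p: "p = (a,b)" "0 \<le> a" "0 \<le> b" "a + b \<le> 1" by (auto simp: Xi_def)
    have "norm p \<le> norm a + norm b" unfolding p(1) by (rule norm_Pair_le)
    also have "\<dots> \<le> 2" using p by simp
    finally show "p \<in> cball 0 2" by simp
  qed
  then show ?thesis using bounded_cball bounded_subset by blast
qed

lemma Xi_convex: "convex Xi"
proof (rule convexI)
  fix x y :: "real \<times> real" and u v :: real
  assume x: "x \<in> Xi" and y: "y \<in> Xi" and uv0: "0 \<le> u" "0 \<le> v" "u + v = 1"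
  then have uv: "0 \<le> u \<and> 0 \<le> v \<and> u + v = 1" by simp
  obtain a b where ab: "x = (a,b)" "0 \<le> a" "0 \<le> b" "a + b \<le> 1" using x by (auto simp: Xi_def)
  obtain c d where cd: "y = (c,d)" "0 \<le> c" "0 \<le> d" "c + d \<le> 1" using y by (auto simp: Xi_def)
  have "u * a + v * c \<ge> 0" "u * b + v * d \<ge> 0" using ab cd uv by simp_all
  moreover have "u * a + v * c + (u * b + v * d) = u * (a+b) + v * (c+d)" by (simp add: algebra_simps)
  moreover have "u * (a+b) + v * (c+d) \<le> u * 1 + v * 1" using ab cd uv by (intro add_mono mult_left_mono) auto
  ultimately show "u *\<^sub>R x + v *\<^sub>R y \<in> Xi" using ab cd uv by (simp add: Xi_def)
qed

lemma Fb_cont: "continuous_on Xi (\<lambda>p. Fb \<beta> p r)"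
  unfolding Fb_EE by (intro cont_EE continuous_intros) (auto simp: Xi_def)

lemma locmin_to3:
  assumes P: "P \<in> Xi" and e: "\<epsilon> > 0" and H: "\<forall>y\<in>Xi. dist y P < \<epsilon> \<longrightarrow> Fb \<beta> P r \<le> Fb \<beta> y r"
  shows "locmin3 \<beta> r (-r/2) (-r/2) (1 - fst P - snd P) (fst P) (snd P)"
  unfolding locmin3_def
proof (intro exI[of _ "\<epsilon>/2"] conjI allI impI)
  show "\<epsilon>/2 > 0" using e by simp
  fix a b c assume h: "a + b + c = 0 \<and> \<bar>a\<bar> < \<epsilon>/2 \<and> \<bar>b\<bar> < \<epsilon>/2 \<and> \<bar>c\<bar> < \<epsilon>/2 \<and>
     1 - fst P - snd P + a \<ge> 0 \<and> fst P + b \<ge> 0 \<and> snd P + c \<ge> 0"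
  define y where "y = (fst P + b, snd P + c)"
  have yX: "y \<in> Xi" using h unfolding y_def Xi_def by auto
  have "dist y P = norm (b, c)" unfolding y_def dist_norm by (cases P) simp
  also have "\<dots> \<le> norm b + norm c" by (rule norm_Pair_le)
  also have "\<dots> < \<epsilon>" using h by simp
  finally have dy: "dist y P < \<epsilon>" .
  have eq: "1 - (fst P + b) - (snd P + c) = 1 - fst P - snd P + a" using h by simp
  have "Fb \<beta> P r \<le> Fb \<beta> y r" using H yX dy by blast
  then show "EE \<beta> r (- r / 2) (- r / 2) (1 - fst P - snd P) (fst P) (snd P)
       \<le> EE \<beta> r (- r / 2) (- r / 2) (1 - fst P - snd P + a) (fst P + b) (snd P + c)"
    unfolding Fb_EE y_def fst_conv snd_conv eq .
qed


definition R0 :: "(real \<times> real) set" where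
  "R0 = {p. 1 - fst p - snd p > fst p \<and> 1 - fst p - snd p > snd p}"
definition R1 :: "(real \<times> real) set" where
  "R1 = {p. fst p > snd p \<and> fst p > 1 - fst p - snd p}"
definition R2 :: "(real \<times> real) set" where
  "R2 = {p. snd p > fst p \<and> snd p > 1 - fst p - snd p}"

lemma R_open: "open R0" "open R1" "open R2"
  unfolding R0_def R1_def R2_def
  by (intro open_Collect_conj open_Collect_less continuous_intros)+

lemma R_disj: "R0 \<inter> R1 = {}" "R0 \<inter> R2 = {}" "R1 \<inter> R2 = {}"
  unfolding R0_def R1_def R2_def by auto

lemma cl_R0: "closure R0 \<subseteq> {p. 1 - fst p - snd p \<ge> fst p \<and> 1 - fst p - snd p \<ge> snd p}"
  by (rule closure_minimal) (auto simp: R0_def intro!: closed_Collect_conj closed_Collect_le continuous_intros)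
lemma cl_R1: "closure R1 \<subseteq> {p. fst p \<ge> snd p \<and> fst p \<ge> 1 - fst p - snd p}"
  by (rule closure_minimal) (auto simp: R1_def intro!: closed_Collect_conj closed_Collect_le continuous_intros)
lemma cl_R2: "closure R2 \<subseteq> {p. snd p \<ge> fst p \<and> snd p \<ge> 1 - fst p - snd p}"
  by (rule closure_minimal) (auto simp: R2_def intro!: closed_Collect_conj closed_Collect_le continuous_intros)

lemma Fb_field: "Fb \<beta> p r = Fb \<beta> p 0 + r * (3 * (1 - fst p - snd p) - 1) / 2"
  unfolding Fb_EE EE_def by (simp add: field_simps)

definition sw :: "real \<times> real \<Rightarrow> real \<times> real" where "sw p = (snd p, fst p)"

lemma Fb_sw: "Fb \<beta> (sw p) r = Fb \<beta> p r"
  unfolding Fb_EE sw_def fst_conv snd_conv by (subst EE_swap12) (simp add: algebra_simps)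

lemma sw_Xi: "p \<in> Xi \<Longrightarrow> sw p \<in> Xi" by (auto simp: Xi_def sw_def)
lemma sw_sw: "sw (sw p) = p" by (simp add: sw_def)
lemma dist_sw: "dist (sw p) (sw q) = dist p q"
  by (cases p; cases q) (simp add: sw_def dist_Pair_Pair add.commute)
lemma cont_sw: "continuous_on S sw" unfolding sw_def by (intro continuous_intros)


context fixes \<beta> :: real assumes b2: "\<beta> > 2"
begin

definition TS :: "real \<Rightarrow> bool" where
  "TS ts \<longleftrightarrow> 1/3 < ts \<and> ts \<le> 1/2 \<and> (\<forall>t\<in>{1/3..1/2}. dg \<beta> 0 ts \<le> dg \<beta> 0 t)"

lemma TS_ex: "\<exists>ts. TS ts" using tstar_ex[OF b2] unfolding TS_def by blast

lemma h0_lt_ts: assumes r: "r > 0" and ts: "TS ts" shows "h0 \<beta> r < dg \<beta> 0 ts"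
proof -
  have t: "1/3 < ts" "ts \<le> 1/2" using ts unfolding TS_def by blast+
  have le: "dg \<beta> r (qb \<beta> r) \<le> dg \<beta> r ts"
  proof (cases "ts = qb \<beta> r")
    case True then show ?thesis by simp
  next
    case False
    have "dg \<beta> r (qb \<beta> r) < dg \<beta> r ts" by (rule dg_min[OF b2 r]) (use t False in auto)
    then show ?thesis by simp
  qed
  have "h0 \<beta> r = dg \<beta> r (qb \<beta> r)" by (rule h0_dg[OF b2])
  also have "\<dots> \<le> dg \<beta> r ts" by (rule le)
  also have "\<dots> = dg \<beta> 0 ts + r * (1 - 3*ts)" by (rule dg_r)
  also have "\<dots> < dg \<beta> 0 ts" using r t by (simp add: mult_pos_neg)
  finally show ?thesis .
qed

lemma h0_ge_ts: assumes r: "r > 0" and ts: "TS ts" shows "h0 \<beta> r \<ge> dg \<beta> 0 ts - r/2"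
proof -
  have q: "1/3 < qb \<beta> r" "qb \<beta> r < 1/2" using qb_props[OF b2 r] by auto
  have all: "\<forall>t\<in>{1/3..1/2}. dg \<beta> 0 ts \<le> dg \<beta> 0 t" using ts unfolding TS_def by blast
  have "dg \<beta> 0 ts \<le> dg \<beta> 0 (qb \<beta> r)" using bspec[OF all, of "qb \<beta> r"] q by simp
  moreover have "h0 \<beta> r = dg \<beta> 0 (qb \<beta> r) + r * (1 - 3 * qb \<beta> r)" unfolding h0_dg[OF b2] by (rule dg_r)
  moreover have "r * (1 - 3 * qb \<beta> r) \<ge> r * (-1/2)" using q r by (intro mult_left_mono) auto
  ultimately show ?thesis by simp
qed

lemma bar01: assumes r: "r > 0" and ts: "TS ts" and p: "p \<in> Xi" "1 - fst p - snd p = fst p" "snd p \<le> fst p"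
  shows "Fb \<beta> p r > h0 \<beta> r"
proof -
  obtain a b where ab: "p = (a, b)" by (cases p)
  have b: "b = 1 - 2*a" using p ab by simp
  have a: "1/3 \<le> a" "a \<le> 1/2" using p ab b by (auto simp: Xi_def)
  have "Fb \<beta> p r = Fb \<beta> p 0 + r * (3 * a - 1) / 2" using Fb_field[of \<beta> p r] p ab by simp
  also have "\<dots> \<ge> Fb \<beta> p 0" using r a by simp
  finally have "Fb \<beta> p r \<ge> Fb \<beta> p 0" .
  moreover have "Fb \<beta> p 0 = dg \<beta> 0 a"
    unfolding Fb_EE dg_def ab b by (simp add: EE_swap02[of \<beta> 0 0 0 a] algebra_simps)
  moreover have "dg \<beta> 0 a \<ge> dg \<beta> 0 ts" using ts a by (auto simp: TS_def)
  ultimately show ?thesis using h0_lt_ts[OF r ts] by simp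
qed

lemma bar02: assumes r: "r > 0" and ts: "TS ts" and p: "p \<in> Xi" "1 - fst p - snd p = snd p" "fst p \<le> snd p"
  shows "Fb \<beta> p r > h0 \<beta> r"
proof -
  obtain a b where ab: "p = (a, b)" by (cases p)
  have b: "a = 1 - 2*b" using p ab by simp
  have a: "1/3 \<le> b" "b \<le> 1/2" using p ab b by (auto simp: Xi_def)
  have "Fb \<beta> p r = Fb \<beta> p 0 + r * (3 * b - 1) / 2" using Fb_field[of \<beta> p r] p ab by simp
  also have "\<dots> \<ge> Fb \<beta> p 0" using r a by simp
  finally have "Fb \<beta> p r \<ge> Fb \<beta> p 0" .
  moreover have "Fb \<beta> p 0 = dg \<beta> 0 b"
    unfolding Fb_EE dg_def ab b by (simp add: EE_swap01[of \<beta> 0 0 0 b] algebra_simps)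
  moreover have "dg \<beta> 0 b \<ge> dg \<beta> 0 ts" using ts a by (auto simp: TS_def)
  ultimately show ?thesis using h0_lt_ts[OF r ts] by simp
qed

lemma bar12: assumes r: "r > 0" and p: "p \<in> Xi" "fst p = snd p" "1 - fst p - snd p \<le> fst p"
    and ne: "p \<noteq> sigma0 \<beta> r"
  shows "Fb \<beta> p r > h0 \<beta> r"
proof -
  obtain a b where ab: "p = (a, b)" by (cases p)
  have b: "b = a" using p ab by simp
  have a: "1/3 \<le> a" "a \<le> 1/2" using p ab b by (auto simp: Xi_def)
  have "a \<noteq> qb \<beta> r" using ne ab b by (auto simp: sigma0_def)
  then have "dg \<beta> r (qb \<beta> r) < dg \<beta> r a" using dg_min[OF b2 r] a by simp
  moreover have "Fb \<beta> p r = dg \<beta> r a" unfolding Fb_EE dg_def ab b by (simp add: algebra_simps)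
  ultimately show ?thesis by (simp add: h0_dg[OF b2])
qed

lemma cases3: "\<not>(x0 > a \<and> x0 > b) \<Longrightarrow> \<not>(a > b \<and> a > x0) \<Longrightarrow> \<not>(b > a \<and> b > (x0::real)) \<Longrightarrow>
  (x0 = a \<and> b \<le> a) \<or> (x0 = b \<and> a \<le> b) \<or> (a = b \<and> x0 \<le> a)"
  by (cases x0 a rule: linorder_cases; cases x0 b rule: linorder_cases; cases a b rule: linorder_cases) auto

lemma sub_R: assumes r: "r > 0" and ts: "TS ts" and p: "p \<in> sublevel \<beta> r"
  shows "p \<in> R0 \<union> R1 \<union> R2"
proof -
  have pX: "p \<in> Xi" and F: "Fb \<beta> p r < h0 \<beta> r" using p by (auto simp: sublevel_def)
  have s: "p \<noteq> sigma0 \<beta> r" using F by (auto simp: h0_def)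
  show ?thesis
  proof (rule ccontr)
    assume "\<not> ?thesis"
    then have "\<not>(1 - fst p - snd p > fst p \<and> 1 - fst p - snd p > snd p)" "\<not>(fst p > snd p \<and> fst p > 1 - fst p - snd p)"
      "\<not>(snd p > fst p \<and> snd p > 1 - fst p - snd p)" unfolding R0_def R1_def R2_def by auto
    from cases3[OF this] show False
    proof (elim disjE conjE)
      assume "1 - fst p - snd p = fst p" "snd p \<le> fst p"
      then show False using bar01[OF r ts pX] F by simp
    next
      assume "1 - fst p - snd p = snd p" "fst p \<le> snd p"
      then show False using bar02[OF r ts pX] F by simp
    next
      assume "fst p = snd p" "1 - fst p - snd p \<le> fst p"
      then show False using bar12[OF r pX _ _ s] F by simp
    qed
  qed
qed

lemma hA2: assumes r: "r > 0" and ts: "TS ts" and x: "x \<in> Xi" "x \<in> closure R2" "Fb \<beta> x r < h0 \<beta> r"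
  shows "x \<in> R2"
proof -
  have c: "snd x \<ge> fst x" "snd x \<ge> 1 - fst x - snd x" using cl_R2 x(2) by auto
  have s: "x \<noteq> sigma0 \<beta> r" using x(3) by (auto simp: h0_def)
  show ?thesis
  proof (rule ccontr)
    assume "x \<notin> R2"
    then have "snd x = fst x \<or> snd x = 1 - fst x - snd x" using c unfolding R2_def by auto
    then show False
    proof
      assume "snd x = fst x" then show False using bar12[OF r x(1) _ _ s] c x(3) by simp
    next
      assume "snd x = 1 - fst x - snd x" then show False using bar02[OF r ts x(1)] c x(3) by simp
    qed
  qed
qed

lemma hA1: assumes r: "r > 0" and ts: "TS ts" and x: "x \<in> Xi" "x \<in> closure R1" "Fb \<beta> x r < h0 \<beta> r"
  shows "x \<in> R1"
proof -
  have c: "fst x \<ge> snd x" "fst x \<ge> 1 - fst x - snd x" using cl_R1 x(2) by auto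
  have s: "x \<noteq> sigma0 \<beta> r" using x(3) by (auto simp: h0_def)
  show ?thesis
  proof (rule ccontr)
    assume "x \<notin> R1"
    then have "snd x = fst x \<or> fst x = 1 - fst x - snd x" using c unfolding R1_def by auto
    then show False
    proof
      assume "snd x = fst x" then show False using bar12[OF r x(1) _ _ s] c x(3) by simp
    next
      assume "fst x = 1 - fst x - snd x" then show False using bar01[OF r ts x(1)] c x(3) by simp
    qed
  qed
qed

lemma hA0: assumes r: "r > 0" and ts: "TS ts" and x: "x \<in> Xi" "x \<in> closure R0" "Fb \<beta> x r < h0 \<beta> r"
  shows "x \<in> R0"
proof -
  have c: "1 - fst x - snd x \<ge> fst x" "1 - fst x - snd x \<ge> snd x" using cl_R0 x(2) by auto
  show ?thesis
  proof (rule ccontr)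
    assume "x \<notin> R0"
    then have "1 - fst x - snd x = fst x \<or> 1 - fst x - snd x = snd x" using c unfolding R0_def by auto
    then show False
    proof
      assume "1 - fst x - snd x = fst x" then show False using bar01[OF r ts x(1)] c x(3) by simp
    next
      assume "1 - fst x - snd x = snd x" then show False using bar02[OF r ts x(1)] c x(3) by simp
    qed
  qed
qed

end

lemma closure_sub_le:
  assumes "W \<subseteq> sublevel \<beta> r" shows "closure W \<subseteq> {x \<in> Xi. Fb \<beta> x r \<le> h0 \<beta> r}"
proof (rule closure_minimal)
  show "W \<subseteq> {x \<in> Xi. Fb \<beta> x r \<le> h0 \<beta> r}" using assms by (auto simp: sublevel_def)
  have "closed (Xi \<inter> (\<lambda>x. Fb \<beta> x r) -` {..h0 \<beta> r})"
    by (rule continuous_closed_preimage[OF Fb_cont Xi_closed]) simp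
  moreover have "Xi \<inter> (\<lambda>x. Fb \<beta> x r) -` {..h0 \<beta> r} = {x \<in> Xi. Fb \<beta> x r \<le> h0 \<beta> r}" by auto
  ultimately show "closed {x \<in> Xi. Fb \<beta> x r \<le> h0 \<beta> r}" by simp
qed

context fixes \<beta> :: real assumes b2: "\<beta> > 2"
begin

lemma crit_R2:
  assumes r: "r > 0" and PX: "P \<in> Xi" and PR: "P \<in> R2" and e: "\<epsilon> > 0"
    and H: "\<forall>y\<in>Xi. dist y P < \<epsilon> \<longrightarrow> Fb \<beta> P r \<le> Fb \<beta> y r"
  shows "P = mvec1 \<beta> r"
proof -
  define x0 x1 x2 where "x0 = 1 - fst P - snd P" and "x1 = fst P" and "x2 = snd P"
  have lm: "locmin3 \<beta> r (-r/2) (-r/2) x0 x1 x2"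
    unfolding x0_def x1_def x2_def by (rule locmin_to3[OF PX e H])
  have nn: "x0 \<ge> 0" "x1 \<ge> 0" "x2 \<ge> 0" "x0 + x1 + x2 = 1" using PX unfolding x0_def x1_def x2_def Xi_def by auto
  note C = locmin3_pos_crit[OF b2 lm nn]
  have lp: "ll \<beta> > 0" using ll_pos[OF b2] .
  have o: "x1 < x2" "x0 < x2" using PR unfolding R2_def x0_def x1_def x2_def by auto
  have g12: "GG \<beta> x1 = GG \<beta> x2" using C by simp
  have g0: "GG \<beta> x0 = GG \<beta> x1 - 3*r/2" using C by simp
  have x1l: "x1 < ll \<beta>"
  proof (rule ccontr)
    assume "\<not> x1 < ll \<beta>" then have "GG \<beta> x2 < GG \<beta> x1" using GG_dec[OF b2, of x1 x2] o by simp
    then show False using g12 by simp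
  qed
  have x2l: "ll \<beta> < x2"
  proof (rule ccontr)
    assume "\<not> ll \<beta> < x2" then have "GG \<beta> x1 < GG \<beta> x2" using GG_inc[OF b2, of x1 x2] o C by simp
    then show False using g12 by simp
  qed
  have x0l: "x0 < ll \<beta>"
  proof (rule ccontr)
    assume "\<not> x0 < ll \<beta>" then have "GG \<beta> x2 < GG \<beta> x0" using GG_dec[OF b2, of x0 x2] o by simp
    then show False using g12 g0 r by simp
  qed
  define y where "y = GG \<beta> x1"
  have h1: "HH \<beta> y = x1" using HH_eq[OF b2, of x1 y] C x1l by (simp add: y_def)
  have k2: "KK \<beta> y = x2" using KK_eq[OF b2, of x2 y] x2l g12 by (simp add: y_def)
  have h0': "HH \<beta> (y - 3*r/2) = x0" using HH_eq[OF b2, of x0 "y - 3*r/2"] C x0l g0 by (simp add: y_def)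
  have Ph: "Phi \<beta> r y = 1" using h1 k2 h0' nn by (simp add: Phi_def)
  have yg: "y \<le> gg \<beta>" using GG_le_gg[OF b2, of x1] C by (simp add: y_def)
  have "y2 \<beta> r = y" by (rule y2_eq[OF b2 r yg Ph])
  then show ?thesis using h1 k2 by (simp add: mvec1_def x1_def x2_def)
qed

lemma part1:
  assumes r: "r > 0"
  shows "mvec1 \<beta> r \<in> sublevel \<beta> r \<and> mvec1 \<beta> r \<in> R2 \<and>
         sigma0 \<beta> r \<in> closure (connected_component_set (sublevel \<beta> r) (mvec1 \<beta> r))"
proof -
  obtain ts where ts: "TS \<beta> ts" using TS_ex[OF b2] by blast
  define q where "q = qb \<beta> r"
  have q: "1/3 < q" "q < 1/2" using qb_props[OF b2 r] by (auto simp: q_def)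
  define l where "l = ll \<beta>"
  have l: "0 < l" "l < 1/3" using ll_pos[OF b2] ll_third[OF b2] by (auto simp: l_def)
  define Qf where "Qf = (\<lambda>u::real. (q - u, q + u))"
  define S2 where "S2 = sublevel \<beta> r \<inter> R2"
  have QS: "Qf u \<in> S2" if u: "0 < u" "u < q - l" for u
  proof -
    have X: "Qf u \<in> Xi" using u q l by (auto simp: Qf_def Xi_def)
    have "Fb \<beta> (Qf u) r = EE \<beta> r (-r/2) (-r/2) (1 - 2*q) (q - u) (q + u)"
      by (simp add: Fb_EE Qf_def algebra_simps)
    also have "\<dots> < EE \<beta> r (-r/2) (-r/2) (1 - 2*q) q q"
      by (rule transverse[OF b2]) (use u q l in \<open>auto simp: l_def\<close>)
    also have "\<dots> = h0 \<beta> r" by (simp add: h0_dg[OF b2] dg_def q_def)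
    finally have F: "Fb \<beta> (Qf u) r < h0 \<beta> r" .
    have "Qf u \<in> R2" using u q unfolding R2_def Qf_def by auto
    then show ?thesis using X F by (simp add: S2_def sublevel_def)
  qed
  define Seg where "Seg = Qf ` {0<..<q - l}"
  have Segc: "connected Seg" unfolding Seg_def Qf_def
    by (intro connected_continuous_image continuous_intros) simp
  have SegS: "Seg \<subseteq> S2" using QS by (auto simp: Seg_def)
  define u0 where "u0 = (q - l)/2"
  have u0: "0 < u0" "u0 < q - l" using q l by (auto simp: u0_def)
  define C where "C = connected_component_set S2 (Qf u0)"
  have Q0: "Qf u0 \<in> S2" using QS u0 by simp
  have SegC: "Seg \<subseteq> C" unfolding C_def
    by (rule connected_component_maximal) (use Segc SegS u0 in \<open>auto simp: Seg_def\<close>)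
  have S2eq: "S2 = {x \<in> Xi. Fb \<beta> x r < h0 \<beta> r} \<inter> R2" by (auto simp: S2_def sublevel_def)
  obtain P \<epsilon> where P: "P \<in> C" "\<epsilon> > 0" "\<forall>y\<in>Xi. dist y P < \<epsilon> \<longrightarrow> Fb \<beta> P r \<le> Fb \<beta> y r"
    using comp_min[OF Xi_closed Xi_bounded Xi_convex Fb_cont R_open(3) S2eq Q0] hA2[OF b2 r ts]
    unfolding C_def by blast
  have CS: "C \<subseteq> S2" unfolding C_def by (rule connected_component_subset)
  have PS: "P \<in> S2" using P CS by auto
  have "P = mvec1 \<beta> r"
    by (rule crit_R2[OF r _ _ P(2,3)]) (use PS in \<open>auto simp: S2_def sublevel_def\<close>)
  then have mC: "mvec1 \<beta> r \<in> C" using P by simp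
  define W1 where "W1 = connected_component_set (sublevel \<beta> r) (mvec1 \<beta> r)"
  have CW: "C \<subseteq> W1" unfolding W1_def
    by (rule connected_component_maximal[OF mC]) (use CS in \<open>auto simp: C_def S2_def\<close>)
  have "sigma0 \<beta> r \<in> closure W1"
    unfolding closure_approachable
  proof (intro allI impI)
    fix e :: real assume e: "e > 0"
    define u where "u = min (e/4) ((q - l)/2)"
    have u1: "u \<le> (q - l)/2" "u \<le> e/4" "0 < u" using e q l unfolding u_def
      by (simp_all only: min.cobounded1 min.cobounded2) (simp add: u_def)
    then have u: "0 < u" "u < q - l" "u \<le> e/4" using q l by auto
    have "Qf u \<in> Seg" using u unfolding Seg_def by (intro imageI) simp
    then have "Qf u \<in> W1" using SegC CW by blast
    moreover have "dist (Qf u) (sigma0 \<beta> r) < e"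
    proof -
      have "dist (Qf u) (sigma0 \<beta> r) = norm (-u, u)"
        by (simp add: Qf_def sigma0_def q_def dist_norm)
      also have "\<dots> \<le> norm (-u) + norm u" by (rule norm_Pair_le)
      also have "\<dots> < e" using u e by simp
      finally show ?thesis .
    qed
    ultimately show "\<exists>y\<in>W1. dist y (sigma0 \<beta> r) < e" by blast
  qed
  then show ?thesis using mC CS by (auto simp: S2_def W1_def)
qed

end

context fixes \<beta> :: real assumes b2: "\<beta> > 2"
begin

lemma crit_R0:
  assumes r: "r > 0" "r \<le> 1/4" and PX: "P \<in> Xi" and PR: "P \<in> R0" and e: "\<epsilon> > 0"
    and H: "\<forall>y\<in>Xi. dist y P < \<epsilon> \<longrightarrow> Fb \<beta> P r \<le> Fb \<beta> y r"
  shows "P = mvec0 \<beta> r"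
proof -
  define x0 x1 x2 where "x0 = 1 - fst P - snd P" and "x1 = fst P" and "x2 = snd P"
  have lm: "locmin3 \<beta> r (-r/2) (-r/2) x0 x1 x2"
    unfolding x0_def x1_def x2_def by (rule locmin_to3[OF PX e H])
  have nn: "x0 \<ge> 0" "x1 \<ge> 0" "x2 \<ge> 0" "x0 + x1 + x2 = 1" using PX unfolding x0_def x1_def x2_def Xi_def by auto
  note C = locmin3_pos_crit[OF b2 lm nn]
  have lp: "ll \<beta> > 0" using ll_pos[OF b2] .
  have o: "x1 < x0" "x2 < x0" using PR unfolding R0_def x0_def x1_def x2_def by auto
  have g12: "GG \<beta> x1 = GG \<beta> x2" using C by simp
  consider "x1 = x2" | "x1 < x2" | "x2 < x1" by linarith
  then show ?thesis
  proof cases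
    case 1
    define t where "t = x1"
    have Pt: "P = (t, t)" using 1 unfolding t_def x1_def x2_def by (cases P) simp
    have t0: "0 < t" using C by (simp add: t_def)
    have t13: "t < 1/3" using o 1 nn by (simp add: t_def)
    define d where "d = min (\<epsilon>/2) (min t (1/2 - t))"
    have d1: "0 < d" using e t0 t13 unfolding d_def by simp
    have d2: "d \<le> \<epsilon>/2" unfolding d_def by (rule min.cobounded1)
    have d3: "d \<le> t" unfolding d_def by (meson min.cobounded1 min.cobounded2 order.trans)
    have d4: "d \<le> 1/2 - t" unfolding d_def by (meson min.cobounded2 order.trans)
    note d = d1 d2 d3 d4
    have dgP: "dg \<beta> r t = Fb \<beta> P r" by (simp add: Pt Fb_EE dg_def algebra_simps)
    have locd: "dg \<beta> r t \<le> dg \<beta> r s" if s: "\<bar>t - s\<bar> < d" for s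
    proof -
      have sX: "(s, s) \<in> Xi" using s d by (auto simp: Xi_def abs_if split: if_splits)
      have "dist (s, s) P = norm (s - t, s - t)" by (simp add: Pt dist_norm)
      also have "\<dots> \<le> norm (s - t) + norm (s - t)" by (rule norm_Pair_le)
      also have "\<dots> < \<epsilon>" using s d by (simp add: abs_minus_commute)
      finally have "Fb \<beta> P r \<le> Fb \<beta> (s, s) r" using H sX by blast
      moreover have "Fb \<beta> (s, s) r = dg \<beta> r s" by (simp add: Fb_EE dg_def algebra_simps)
      ultimately show ?thesis using dgP by simp
    qed
    have crit: "3 * Df r t - (2/\<beta>) * Lf t = 0"
      by (rule DERIV_local_min[OF DERIV_dg[of t \<beta> r] d(1)]) (use t0 t13 b2 locd in auto)
    have lm1: "\<exists>\<epsilon>>0. \<forall>s. t < s \<and> s < t + \<epsilon> \<longrightarrow> dg \<beta> r t \<le> dg \<beta> r s"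
      using d(1) locd by (intro exI[of _ d]) auto
    have "pb \<beta> r = t" by (rule diag_crit_pb[OF b2 r t0 t13 crit lm1])
    then show ?thesis using Pt by (simp add: mvec0_def)
  next
    case 2
    have x2l: "ll \<beta> < x2"
    proof (rule ccontr)
      assume "\<not> ll \<beta> < x2" then have "GG \<beta> x1 < GG \<beta> x2" using GG_inc[OF b2, of x1 x2] 2 C by simp
      then show False using g12 by simp
    qed
    have "GG \<beta> x0 + r = GG \<beta> x2 + (-r/2)" using C by simp
    then show ?thesis using locmin3_conc[OF b2 locmin3_swap12[OF lm]] x2l o nn by simp
  next
    case 3
    have x1l: "ll \<beta> < x1"
    proof (rule ccontr)
      assume "\<not> ll \<beta> < x1" then have "GG \<beta> x2 < GG \<beta> x1" using GG_inc[OF b2, of x2 x1] 3 C by simp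
      then show False using g12 by simp
    qed
    have "GG \<beta> x0 + r = GG \<beta> x1 + (-r/2)" using C by simp
    then show ?thesis using locmin3_conc[OF b2 lm] x1l o nn by simp
  qed
qed

lemma part2:
  assumes r: "r > 0" "r \<le> 1/4" and w: "w \<in> Xi" "w \<in> R0" "Fb \<beta> w r < h0 \<beta> r"
  shows "mvec0 \<beta> r \<in> sublevel \<beta> r \<and> mvec0 \<beta> r \<in> R0"
proof -
  obtain ts where ts: "TS \<beta> ts" using TS_ex[OF b2] by blast
  define S0 where "S0 = sublevel \<beta> r \<inter> R0"
  have S0eq: "S0 = {x \<in> Xi. Fb \<beta> x r < h0 \<beta> r} \<inter> R0" by (auto simp: S0_def sublevel_def)
  have wS: "w \<in> S0" using w by (simp add: S0_def sublevel_def)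
  obtain P \<epsilon> where P: "P \<in> connected_component_set S0 w" "\<epsilon> > 0" "\<forall>y\<in>Xi. dist y P < \<epsilon> \<longrightarrow> Fb \<beta> P r \<le> Fb \<beta> y r"
    using comp_min[OF Xi_closed Xi_bounded Xi_convex Fb_cont R_open(1) S0eq wS] hA0[OF b2 r(1) ts] by blast
  have PS: "P \<in> S0" using P(1) connected_component_subset by blast
  have "P = mvec0 \<beta> r"
    by (rule crit_R0[OF r _ _ P(2,3)]) (use PS in \<open>auto simp: S0_def sublevel_def\<close>)
  then show ?thesis using PS by (simp add: S0_def)
qed

end

lemma comp_mem: "x \<in> S \<Longrightarrow> connected_component_set S x \<in> components S"
  by (auto simp: components_def)

lemma sub_sw: "x \<in> sublevel \<beta> r \<Longrightarrow> sw x \<in> sublevel \<beta> r"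
  by (simp add: sublevel_def sw_Xi Fb_sw)

lemma mvec2_sw: "mvec2 \<beta> r = sw (mvec1 \<beta> r)" by (simp add: sw_def mvec1_def mvec2_def)
lemma sigma_sw: "sw (sigma0 \<beta> r) = sigma0 \<beta> r" by (simp add: sw_def sigma0_def)

context fixes \<beta> :: real assumes b2: "\<beta> > 2"
begin

lemma TS_bounds: "TS \<beta> ts \<Longrightarrow> 1/3 < ts \<and> ts \<le> 1/2" by (auto simp: TS_def[OF b2])

lemma comp_in_R:
  assumes r: "r > 0" and m: "m \<in> sublevel \<beta> r" and RA: "A \<in> {R0, R1, R2}" and mA: "m \<in> A"
  shows "connected_component_set (sublevel \<beta> r) m \<subseteq> A"
proof -
  obtain ts where ts: "TS \<beta> ts" using TS_ex[OF b2] by blast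
  let ?W = "connected_component_set (sublevel \<beta> r) m"
  have Ws: "?W \<subseteq> R0 \<union> R1 \<union> R2" using sub_R[OF b2 r ts] connected_component_subset by blast
  have mW: "m \<in> ?W" using m by simp
  have ne: "?W \<inter> A \<noteq> {}" using mW mA by blast
  consider "A = R0" | "A = R1" | "A = R2" using RA by blast
  then show ?thesis
  proof cases
    case 1
    have "?W \<subseteq> R0 \<union> (R1 \<union> R2)" using Ws by blast
    from conn_sub[OF connected_connected_component this R_open(1) open_Un[OF R_open(2,3)]] R_disj ne 1
    show ?thesis by blast
  next
    case 2
    have "?W \<subseteq> R1 \<union> (R0 \<union> R2)" using Ws by blast
    from conn_sub[OF connected_connected_component this R_open(2) open_Un[OF R_open(1,3)]] R_disj ne 2
    show ?thesis by blast
  next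
    case 3
    have "?W \<subseteq> R2 \<union> (R0 \<union> R1)" using Ws by blast
    from conn_sub[OF connected_connected_component this R_open(3) open_Un[OF R_open(1,2)]] R_disj ne 3
    show ?thesis by blast
  qed
qed

lemma main1:
  assumes r: "r > 0"
  defines "W1 \<equiv> connected_component_set (sublevel \<beta> r) (mvec1 \<beta> r)"
    and "W2 \<equiv> connected_component_set (sublevel \<beta> r) (mvec2 \<beta> r)"
  shows "mvec1 \<beta> r \<in> sublevel \<beta> r \<and> mvec2 \<beta> r \<in> sublevel \<beta> r \<and> W1 \<subseteq> R2 \<and> W2 \<subseteq> R1 \<and>
    closure W1 \<inter> closure W2 = {sigma0 \<beta> r}"
proof -
  note p1 = part1[OF b2 r]
  have m1: "mvec1 \<beta> r \<in> sublevel \<beta> r" "mvec1 \<beta> r \<in> R2" using p1 by auto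
  have m2: "mvec2 \<beta> r \<in> sublevel \<beta> r" using sub_sw[OF m1(1)] by (simp add: mvec2_sw)
  have m2R: "mvec2 \<beta> r \<in> R1" using m1(2) by (simp add: mvec2_sw sw_def R1_def R2_def algebra_simps)
  have s1: "sigma0 \<beta> r \<in> closure W1" using p1 by (simp add: W1_def)
  have swW: "sw ` W1 \<subseteq> W2" unfolding W2_def
  proof (rule connected_component_maximal)
    show "mvec2 \<beta> r \<in> sw ` W1" using m1 by (simp add: mvec2_sw W1_def)
    show "connected (sw ` W1)" unfolding W1_def
      by (rule connected_continuous_image[OF cont_sw]) simp
    show "sw ` W1 \<subseteq> sublevel \<beta> r" unfolding W1_def using connected_component_subset sub_sw by blast
  qed
  have s2: "sigma0 \<beta> r \<in> closure W2"
    unfolding closure_approachable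
  proof (intro allI impI)
    fix e :: real assume "e > 0"
    then obtain y where y: "y \<in> W1" "dist y (sigma0 \<beta> r) < e" using s1 unfolding closure_approachable by blast
    have "sw y \<in> W2" using swW y by blast
    moreover have "dist (sw y) (sigma0 \<beta> r) = dist y (sigma0 \<beta> r)"
      using dist_sw[of y "sigma0 \<beta> r"] by (simp add: sigma_sw)
    ultimately show "\<exists>y\<in>W2. dist y (sigma0 \<beta> r) < e" using y by (intro bexI[of _ "sw y"]) auto
  qed
  have W1R: "W1 \<subseteq> R2" unfolding W1_def by (rule comp_in_R[OF r m1(1)]) (use m1 in auto)
  have W2R: "W2 \<subseteq> R1" unfolding W2_def by (rule comp_in_R[OF r m2]) (use m2R in auto)
  have c1: "closure W1 \<subseteq> {x \<in> Xi. Fb \<beta> x r \<le> h0 \<beta> r}" unfolding W1_def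
    by (rule closure_sub_le) (rule connected_component_subset)
  have c2: "closure W2 \<subseteq> {x \<in> Xi. Fb \<beta> x r \<le> h0 \<beta> r}" unfolding W2_def
    by (rule closure_sub_le) (rule connected_component_subset)
  have d1: "closure W1 \<subseteq> closure R2" using W1R closure_mono by blast
  have d2: "closure W2 \<subseteq> closure R1" using W2R closure_mono by blast
  have "closure W1 \<inter> closure W2 \<subseteq> {sigma0 \<beta> r}"
  proof
    fix x assume x: "x \<in> closure W1 \<inter> closure W2"
    have a: "snd x \<ge> fst x" "snd x \<ge> 1 - fst x - snd x" using x d1 cl_R2 by blast+
    have b: "fst x \<ge> snd x" "fst x \<ge> 1 - fst x - snd x" using x d2 cl_R1 by blast+
    have X: "x \<in> Xi" "Fb \<beta> x r \<le> h0 \<beta> r" using x c1 by auto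
    show "x \<in> {sigma0 \<beta> r}"
    proof (rule ccontr)
      assume "x \<notin> {sigma0 \<beta> r}"
      then have "Fb \<beta> x r > h0 \<beta> r" using bar12[OF b2 r X(1)] a b by simp
      then show False using X by simp
    qed
  qed
  then have "closure W1 \<inter> closure W2 = {sigma0 \<beta> r}" using s1 s2 by blast
  then show ?thesis using m1 m2 W1R W2R by simp
qed

end

theorem lemma5p12:
  fixes \<beta> :: real
  assumes "\<beta> > 2"
  shows "(\<forall>r>0. \<exists>W1\<in>components (sublevel \<beta> r). \<exists>W2\<in>components (sublevel \<beta> r).
            mvec1 \<beta> r \<in> W1 \<and> mvec2 \<beta> r \<in> W2 \<and>
            closure W1 \<inter> closure W2 = {sigma0 \<beta> r})
       \<and> (\<exists>\<epsilon>>0. \<forall>r. 0 < r \<and> r < \<epsilon> \<longrightarrow>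
            (\<exists>W0\<in>components (sublevel \<beta> r). mvec0 \<beta> r \<in> W0 \<and>
              (\<forall>W\<in>components (sublevel \<beta> r).
                 (mvec1 \<beta> r \<in> W \<or> mvec2 \<beta> r \<in> W) \<longrightarrow> closure W0 \<inter> closure W = {})))"
proof
  have b2: "\<beta> > 2" by (rule assms)
  show "\<forall>r>0. \<exists>W1\<in>components (sublevel \<beta> r). \<exists>W2\<in>components (sublevel \<beta> r).
            mvec1 \<beta> r \<in> W1 \<and> mvec2 \<beta> r \<in> W2 \<and>
            closure W1 \<inter> closure W2 = {sigma0 \<beta> r}"
  proof (intro allI impI)
    fix r :: real assume r: "r > 0"
    note M = main1[OF b2 r]
    show "\<exists>W1\<in>components (sublevel \<beta> r). \<exists>W2\<in>components (sublevel \<beta> r).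
            mvec1 \<beta> r \<in> W1 \<and> mvec2 \<beta> r \<in> W2 \<and> closure W1 \<inter> closure W2 = {sigma0 \<beta> r}"
      using M by (intro bexI[of _ "connected_component_set (sublevel \<beta> r) (mvec1 \<beta> r)"]
          bexI[of _ "connected_component_set (sublevel \<beta> r) (mvec2 \<beta> r)"] conjI comp_mem) auto
  qed
next
  have b2: "\<beta> > 2" by (rule assms)
  obtain ts where ts: "TS \<beta> ts" using TS_ex[OF b2] by blast
  have t: "1/3 < ts" "ts \<le> 1/2" using TS_bounds[OF b2 ts] by auto
  define l where "l = ll \<beta>"
  have l: "0 < l" "l < 1/3" using ll_pos[OF b2] ll_third[OF b2] by (auto simp: l_def)
  define u where "u = (ts - l)/2"
  have u: "0 < u" "u < ts - l" using t l by (auto simp: u_def)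
  define w where "w = (ts - u, 1 - 2*ts)"
  have wX: "w \<in> Xi" using t u l by (auto simp: w_def Xi_def)
  have wR: "w \<in> R0" using t u by (auto simp: w_def R0_def)
  have w0: "Fb \<beta> w 0 < dg \<beta> 0 ts"
  proof -
    have "Fb \<beta> w 0 = EE \<beta> 0 0 0 (ts + u) (ts - u) (1 - 2*ts)" by (simp add: Fb_EE w_def algebra_simps)
    also have "\<dots> = EE \<beta> 0 0 0 (1 - 2*ts) (ts - u) (ts + u)" by (rule EE_swap02)
    also have "\<dots> < EE \<beta> 0 0 0 (1 - 2*ts) ts ts"
      by (rule transverse[OF b2]) (use t u l in \<open>auto simp: l_def\<close>)
    also have "\<dots> = dg \<beta> 0 ts" by (simp add: dg_def)
    finally show ?thesis .
  qed
  define \<delta> where "\<delta> = dg \<beta> 0 ts - Fb \<beta> w 0"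
  have \<delta>: "\<delta> > 0" using w0 by (simp add: \<delta>_def)
  define \<epsilon> where "\<epsilon> = min (1/4) (\<delta>/2)"
  have e: "\<epsilon> > 0" "\<epsilon> \<le> 1/4" "\<epsilon> \<le> \<delta>/2" using \<delta> unfolding \<epsilon>_def by auto
  show "\<exists>\<epsilon>>0. \<forall>r. 0 < r \<and> r < \<epsilon> \<longrightarrow>
            (\<exists>W0\<in>components (sublevel \<beta> r). mvec0 \<beta> r \<in> W0 \<and>
              (\<forall>W\<in>components (sublevel \<beta> r).
                 (mvec1 \<beta> r \<in> W \<or> mvec2 \<beta> r \<in> W) \<longrightarrow> closure W0 \<inter> closure W = {}))"
  proof (intro exI[of _ \<epsilon>] conjI allI impI)
    show "\<epsilon> > 0" by (rule e)
    fix r assume "0 < r \<and> r < \<epsilon>"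
    then have r: "0 < r" "r \<le> 1/4" "r < \<delta>/2" using e by auto
    have "Fb \<beta> w r = Fb \<beta> w 0 + r * (3 * (1 - fst w - snd w) - 1) / 2" by (rule Fb_field)
    also have "\<dots> \<le> Fb \<beta> w 0 + r"
    proof -
      have "3 * (1 - fst w - snd w) - 1 \<le> 2" using wX by (auto simp: Xi_def)
      then have "r * (3 * (1 - fst w - snd w) - 1) \<le> r * 2" using r by (intro mult_left_mono) auto
      then show ?thesis by simp
    qed
    also have "\<dots> < dg \<beta> 0 ts - r/2" using r by (simp add: \<delta>_def)
    also have "\<dots> \<le> h0 \<beta> r" using h0_ge_ts[OF b2 r(1) ts] by simp
    finally have wF: "Fb \<beta> w r < h0 \<beta> r" .
    note p2 = part2[OF b2 r(1,2) wX wR wF]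
    note M = main1[OF b2 r(1)]
    define W0 where "W0 = connected_component_set (sublevel \<beta> r) (mvec0 \<beta> r)"
    have W0R: "W0 \<subseteq> R0" unfolding W0_def by (rule comp_in_R[OF b2 r(1)]) (use p2 in auto)
    have c0: "closure W0 \<subseteq> {x \<in> Xi. Fb \<beta> x r \<le> h0 \<beta> r}" unfolding W0_def
      by (rule closure_sub_le) (rule connected_component_subset)
    have d0: "closure W0 \<subseteq> closure R0" using W0R closure_mono by blast
    show "\<exists>W0\<in>components (sublevel \<beta> r). mvec0 \<beta> r \<in> W0 \<and>
              (\<forall>W\<in>components (sublevel \<beta> r).
                 (mvec1 \<beta> r \<in> W \<or> mvec2 \<beta> r \<in> W) \<longrightarrow> closure W0 \<inter> closure W = {})"
    proof (intro bexI[of _ W0] conjI ballI impI)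
      show "W0 \<in> components (sublevel \<beta> r)" using p2 unfolding W0_def by (intro comp_mem) auto
      show "mvec0 \<beta> r \<in> W0" using p2 by (simp add: W0_def)
      fix W assume W: "W \<in> components (sublevel \<beta> r)" and mW: "mvec1 \<beta> r \<in> W \<or> mvec2 \<beta> r \<in> W"
      obtain x where Wx: "W = connected_component_set (sublevel \<beta> r) x" using W by (auto simp: components_iff)
      have cW: "closure W \<subseteq> {x \<in> Xi. Fb \<beta> x r \<le> h0 \<beta> r}" unfolding Wx
        by (rule closure_sub_le) (rule connected_component_subset)
      from mW show "closure W0 \<inter> closure W = {}"
      proof
        assume "mvec1 \<beta> r \<in> W"
        then have "W = connected_component_set (sublevel \<beta> r) (mvec1 \<beta> r)"
          unfolding Wx by (rule connected_component_eq[symmetric])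
        then have WR: "W \<subseteq> R2" using M by simp
        show ?thesis
        proof (rule ccontr)
          assume "closure W0 \<inter> closure W \<noteq> {}"
          then obtain z where z: "z \<in> closure W0" "z \<in> closure W" by blast
          have a: "1 - fst z - snd z \<ge> fst z" "1 - fst z - snd z \<ge> snd z" using z d0 cl_R0 by blast+
          have b: "snd z \<ge> fst z" "snd z \<ge> 1 - fst z - snd z" using z WR closure_mono[OF WR] cl_R2 by blast+
          have X: "z \<in> Xi" "Fb \<beta> z r \<le> h0 \<beta> r" using z c0 by auto
          have "Fb \<beta> z r > h0 \<beta> r" using bar02[OF b2 r(1) ts X(1)] a b by simp
          then show False using X by simp
        qed
      next
        assume "mvec2 \<beta> r \<in> W"
        then have "W = connected_component_set (sublevel \<beta> r) (mvec2 \<beta> r)"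
          unfolding Wx by (rule connected_component_eq[symmetric])
        then have WR: "W \<subseteq> R1" using M by simp
        show ?thesis
        proof (rule ccontr)
          assume "closure W0 \<inter> closure W \<noteq> {}"
          then obtain z where z: "z \<in> closure W0" "z \<in> closure W" by blast
          have a: "1 - fst z - snd z \<ge> fst z" "1 - fst z - snd z \<ge> snd z" using z d0 cl_R0 by blast+
          have b: "fst z \<ge> snd z" "fst z \<ge> 1 - fst z - snd z" using z WR closure_mono[OF WR] cl_R1 by blast+
          have X: "z \<in> Xi" "Fb \<beta> z r \<le> h0 \<beta> r" using z c0 by auto
          have "Fb \<beta> z r > h0 \<beta> r" using bar01[OF b2 r(1) ts X(1)] a b by simp
          then show False using X by simp
        qed
      qed
    qed
  qed
qed


end
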